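(* There exist absolute constants $c>0$ and $C>0$ such that the following holds. Let $n\ge2$ be an integer and $L,B,\varepsilon>0$ with $\varepsilon\le LB^2/4$. Then for every PIFO algorithm $\mathcal{A}$ there exist a dimension $d\le C\big(1+Bn^{-1/4}\sqrt{L/\varepsilon}\big)$ and functions $f_1,\dots,f_n:\mathbb{R}^d\to\mathbb{R}$ such that $\{f_i\}_{i=1}^n$ is $L$-average smooth, $f=\frac1n\sum_i f_i$ is convex and has a minimizer $x^*$ with $\|x_0-x^*\|_2\le B$ ($x_0$ the initial point of $\mathcal{A}$), and the iterates of $\mathcal{A}$ satisfy $\mathbb{E} f(x_t)-f(x^* )\ge\varepsilon$ for all integers $0\le t\le c\big(n+Bn^{3/4}\sqrt{L/\varepsilon}\big)$. That is, $\mathcal{A}$ needs $\Omega(n+Bn^{3/4}\sqrt{L/\varepsilon})$ oracle queries.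
   Context: Differentiable $f_1,\dots,f_n:\mathbb{R}^d\to\mathbb{R}$ are $L$-average smooth if $\frac1n\sum_{i=1}^n\|\nabla f_i(x)-\nabla f_i(y)\|_2^2\le L^2\|x-y\|_2^2$ for all $x,y$. For $\gamma>0$, $\mathrm{prox}^{\gamma}_g(x)=\arg\min_u\{g(u)+\frac{1}{2\gamma}\|x-u\|_2^2\}$. PIFO algorithm: given $f_1,\dots,f_n:\mathbb{R}^d\to\mathbb{R}$ and $f=\frac1n\sum_i f_i$, a PIFO algorithm $\mathcal{A}$ is specified by a probability vector $(p_1,\dots,p_n)$ ($p_j\ge0$, $\sum_j p_j=1$), an initial point $x_0$ and parameters $\gamma_t>0$; it draws indices $i_1,i_2,\dots$ independently with $\mathbb{P}(i_t=j)=p_j$, at step $t\ge1$ queries the oracle $h_f(x_{t-1},i_t,\gamma_t)=[f_{i_t}(x_{t-1}),\nabla f_{i_t}(x_{t-1}),\mathrm{prox}^{\gamma_t}_{f_{i_t}}(x_{t-1})]$, and outputs an iterate $x_t\in\mathrm{span}\{x_0,\dots,x_{t-1},\nabla f_{i_1}(x_0),\dots,\nabla f_{i_t}(x_{t-1}),\mathrm{prox}^{\gamma_1}_{f_{i_1}}(x_0),\dots,\mathrm{prox}^{\gamma_t}_{f_{i_t}}(x_{t-1})\}$ (the choice within the span may depend on all previously observed information). Iterate $x_t$ uses $t$ oracle queries. *)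

theory Defs
  imports Complex_Main "HOL-Library.FuncSet"
begin

text \<open>Vectors of R^d are represented as functions nat => real vanishing at all
  coordinates i >= d. Coordinates are 0,...,d-1; component indices are 0,...,n-1.\<close>

type_synonym vec = "nat \<Rightarrow> real"

definition Rd :: "nat \<Rightarrow> vec set" where
  "Rd d = {x. \<forall>i\<ge>d. x i = 0}"

definition vinner :: "nat \<Rightarrow> vec \<Rightarrow> vec \<Rightarrow> real" where
  "vinner d x y = (\<Sum>i<d. x i * y i)"

definition vnorm :: "nat \<Rightarrow> vec \<Rightarrow> real" where
  "vnorm d x = sqrt (\<Sum>i<d. (x i)^2)"

definition vadd :: "vec \<Rightarrow> vec \<Rightarrow> vec" where
  "vadd x y = (\<lambda>i. x i + y i)"

definition vsub :: "vec \<Rightarrow> vec \<Rightarrow> vec" where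
  "vsub x y = (\<lambda>i. x i - y i)"

definition vscale :: "real \<Rightarrow> vec \<Rightarrow> vec" where
  "vscale a x = (\<lambda>i. a * x i)"

definition has_grad :: "nat \<Rightarrow> (vec \<Rightarrow> real) \<Rightarrow> vec \<Rightarrow> vec \<Rightarrow> bool" where
  "has_grad d f x g \<longleftrightarrow> g \<in> Rd d \<and>
     (\<forall>e>0. \<exists>\<delta>>0. \<forall>h\<in>Rd d. vnorm d h < \<delta> \<longrightarrow>
        \<bar>f (vadd x h) - f x - vinner d g h\<bar> \<le> e * vnorm d h)"

definition grad :: "nat \<Rightarrow> (vec \<Rightarrow> real) \<Rightarrow> vec \<Rightarrow> vec" where
  "grad d f x = (THE g. has_grad d f x g)"

definition is_prox :: "nat \<Rightarrow> real \<Rightarrow> (vec \<Rightarrow> real) \<Rightarrow> vec \<Rightarrow> vec \<Rightarrow> bool" where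
  "is_prox d \<gamma> f x u \<longleftrightarrow> u \<in> Rd d \<and>
     (\<forall>v\<in>Rd d. f u + (vnorm d (vsub x u))^2 / (2*\<gamma>) \<le> f v + (vnorm d (vsub x v))^2 / (2*\<gamma>))"

definition prox :: "nat \<Rightarrow> real \<Rightarrow> (vec \<Rightarrow> real) \<Rightarrow> vec \<Rightarrow> vec" where
  "prox d \<gamma> f x = (THE u. is_prox d \<gamma> f x u)"

definition in_span :: "vec set \<Rightarrow> vec \<Rightarrow> bool" where
  "in_span S x \<longleftrightarrow> (\<exists>F c. finite F \<and> F \<subseteq> S \<and> x = (\<lambda>k. \<Sum>v\<in>F. c v * v k))"

definition favg :: "nat \<Rightarrow> (nat \<Rightarrow> vec \<Rightarrow> real) \<Rightarrow> vec \<Rightarrow> real" where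
  "favg n fs x = (\<Sum>i<n. fs i x) / real n"

definition avg_smooth :: "nat \<Rightarrow> nat \<Rightarrow> real \<Rightarrow> (nat \<Rightarrow> vec \<Rightarrow> real) \<Rightarrow> bool" where
  "avg_smooth d n L fs \<longleftrightarrow> (\<forall>x\<in>Rd d. \<forall>y\<in>Rd d.
     (\<Sum>i<n. (vnorm d (vsub (grad d (fs i) x) (grad d (fs i) y)))^2) / real n
       \<le> L^2 * (vnorm d (vsub x y))^2)"

definition convex_Rd :: "nat \<Rightarrow> (vec \<Rightarrow> real) \<Rightarrow> bool" where
  "convex_Rd d f \<longleftrightarrow> (\<forall>x\<in>Rd d. \<forall>y\<in>Rd d. \<forall>\<theta>::real. 0 \<le> \<theta> \<and> \<theta> \<le> 1 \<longrightarrow>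
     f (vadd (vscale \<theta> x) (vscale (1-\<theta>) y)) \<le> \<theta> * f x + (1-\<theta>) * f y)"

text \<open>An observation of step t: (i_t, f_{i_t}(x_{t-1}), grad f_{i_t}(x_{t-1}), prox f_{i_t}(x_{t-1})).\<close>
type_synonym obs = "nat \<times> real \<times> vec \<times> vec"

text \<open>A PIFO algorithm: probability vector p (on indices 0..n-1), step parameters gamma t (t>=1),
  and, for every dimension d, an initial point x0 d and an update rule R d, which maps the
  history of observations (of length t >= 1) to the iterate x_t.\<close>
definition pifo_span_set :: "(nat \<Rightarrow> vec) \<Rightarrow> (nat \<Rightarrow> obs list \<Rightarrow> vec) \<Rightarrow> nat \<Rightarrow> obs list \<Rightarrow> vec set" where
  "pifo_span_set x0 R d h =
     {x0 d} \<union> {R d (take s h) | s. 1 \<le> s \<and> s < length h}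
     \<union> {fst (snd (snd (h ! s))) | s. s < length h}
     \<union> {snd (snd (snd (h ! s))) | s. s < length h}"

definition pifo_algorithm ::
  "nat \<Rightarrow> (nat \<Rightarrow> real) \<Rightarrow> (nat \<Rightarrow> real) \<Rightarrow> (nat \<Rightarrow> vec) \<Rightarrow> (nat \<Rightarrow> obs list \<Rightarrow> vec) \<Rightarrow> bool" where
  "pifo_algorithm n p \<gamma> x0 R \<longleftrightarrow>
     (\<forall>j. 0 \<le> p j) \<and> (\<Sum>j<n. p j) = 1 \<and> (\<forall>t\<ge>1. \<gamma> t > 0) \<and>
     (\<forall>d. x0 d \<in> Rd d) \<and>
     (\<forall>d h. h \<noteq> [] \<longrightarrow> in_span (pifo_span_set x0 R d h) (R d h))"

text \<open>History after t oracle calls, along the index sequence iota (i_s = iota s, s >= 1).\<close>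
primrec pifo_hist ::
  "(nat \<Rightarrow> real) \<Rightarrow> (nat \<Rightarrow> vec) \<Rightarrow> (nat \<Rightarrow> obs list \<Rightarrow> vec) \<Rightarrow> nat \<Rightarrow> (nat \<Rightarrow> vec \<Rightarrow> real)
   \<Rightarrow> (nat \<Rightarrow> nat) \<Rightarrow> nat \<Rightarrow> obs list" where
  "pifo_hist \<gamma> x0 R d fs \<iota> 0 = []"
| "pifo_hist \<gamma> x0 R d fs \<iota> (Suc t) =
     (let h = pifo_hist \<gamma> x0 R d fs \<iota> t;
          x = (if t = 0 then x0 d else R d h);
          i = \<iota> (Suc t)
      in h @ [(i, fs i x, grad d (fs i) x, prox d (\<gamma> (Suc t)) (fs i) x)])"

definition pifo_iter ::
  "(nat \<Rightarrow> real) \<Rightarrow> (nat \<Rightarrow> vec) \<Rightarrow> (nat \<Rightarrow> obs list \<Rightarrow> vec) \<Rightarrow> nat \<Rightarrow> (nat \<Rightarrow> vec \<Rightarrow> real)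
   \<Rightarrow> (nat \<Rightarrow> nat) \<Rightarrow> nat \<Rightarrow> vec" where
  "pifo_iter \<gamma> x0 R d fs \<iota> t = (if t = 0 then x0 d else R d (pifo_hist \<gamma> x0 R d fs \<iota> t))"

text \<open>Expectation of F(x_t) over i_1,...,i_t iid with P(i_s = j) = p j.\<close>
definition pifo_expect ::
  "nat \<Rightarrow> (nat \<Rightarrow> real) \<Rightarrow> (nat \<Rightarrow> real) \<Rightarrow> (nat \<Rightarrow> vec) \<Rightarrow> (nat \<Rightarrow> obs list \<Rightarrow> vec) \<Rightarrow> nat
   \<Rightarrow> (nat \<Rightarrow> vec \<Rightarrow> real) \<Rightarrow> (vec \<Rightarrow> real) \<Rightarrow> nat \<Rightarrow> real" where
  "pifo_expect n p \<gamma> x0 R d fs F t =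
     (\<Sum>\<iota>\<in>PiE {1..t} (\<lambda>_. {..<n}). (\<Prod>s\<in>{1..t}. p (\<iota> s)) * F (pifo_iter \<gamma> x0 R d fs \<iota> t))"

end

theory Submission
  imports Defs "HOL-Analysis.Convex"
begin


definition lc :: "'a set \<Rightarrow> ('a \<Rightarrow> real) \<Rightarrow> ('a \<Rightarrow> nat \<Rightarrow> real) \<Rightarrow> nat \<Rightarrow> real" where
  "lc J c a = (\<lambda>k. \<Sum>l\<in>J. c l * a l k)"

lemma vnorm_sq: "(vnorm d x)^2 = vinner d x x"
  by (simp add: vnorm_def vinner_def sum_nonneg power2_eq_square)

lemma vinner_comm: "vinner d x y = vinner d y x"
  by (simp add: vinner_def mult.commute)

lemma vinner_self_nonneg: "vinner d x x \<ge> 0"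
  by (simp add: vinner_def sum_nonneg)

lemma vinner_add_right: "vinner d x (\<lambda>k. y k + z k) = vinner d x y + vinner d x z"
  by (simp add: vinner_def algebra_simps sum.distrib)
lemma vinner_add_left: "vinner d (\<lambda>k. y k + z k) x = vinner d y x + vinner d z x"
  by (simp add: vinner_def algebra_simps sum.distrib)
lemma vinner_diff_right: "vinner d x (\<lambda>k. y k - z k) = vinner d x y - vinner d x z"
  by (simp add: vinner_def algebra_simps sum_subtractf)
lemma vinner_diff_left: "vinner d (\<lambda>k. y k - z k) x = vinner d y x - vinner d z x"
  by (simp add: vinner_def algebra_simps sum_subtractf)
lemma vinner_scale_right: "vinner d x (\<lambda>k. a * y k) = a * vinner d x y"
  by (simp add: vinner_def algebra_simps sum_distrib_left)
lemma vinner_scale_left: "vinner d (\<lambda>k. a * y k) x = a * vinner d y x"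
  by (simp add: vinner_def algebra_simps sum_distrib_left)
lemma vinner_zero_left[simp]: "vinner d (\<lambda>k. 0) x = 0"
  by (simp add: vinner_def)
lemma vinner_zero_right[simp]: "vinner d x (\<lambda>k. 0) = 0"
  by (simp add: vinner_def)

lemma vinner_lc_right: "vinner d x (lc J c a) = (\<Sum>l\<in>J. c l * vinner d x (a l))"
  unfolding vinner_def lc_def
  by (simp add: sum_distrib_left sum_distrib_right algebra_simps sum.swap[of _ J])

lemma vinner_lc_left: "vinner d (lc J c a) x = (\<Sum>l\<in>J. c l * vinner d (a l) x)"
  using vinner_lc_right[of d x J c a] by (simp add: vinner_comm)

lemma vinner_cs: "(vinner d x y)^2 \<le> vinner d x x * vinner d y y"
  unfolding vinner_def using Cauchy_Schwarz_ineq_sum[of x y "{..<d}"]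
  by (simp add: power2_eq_square)

definition orth :: "nat \<Rightarrow> 'a set \<Rightarrow> ('a \<Rightarrow> nat \<Rightarrow> real) \<Rightarrow> bool" where
  "orth d J a \<longleftrightarrow> (\<forall>l\<in>J. \<forall>l'\<in>J. l \<noteq> l' \<longrightarrow> vinner d (a l) (a l') = 0)"

lemma vinner_lc_orth:
  assumes "orth d J a" "finite J" "l \<in> J"
  shows "vinner d (a l) (lc J c a) = c l * vinner d (a l) (a l)"
proof -
  have "vinner d (a l) (lc J c a) = (\<Sum>l'\<in>J. c l' * vinner d (a l) (a l'))"
    by (rule vinner_lc_right)
  also have "\<dots> = (\<Sum>l'\<in>{l}. c l' * vinner d (a l) (a l'))"
    using assms by (intro sum.mono_neutral_right) (auto simp: orth_def)
  finally show ?thesis by simp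
qed

lemma vinner_lc_lc_orth:
  assumes "orth d J a" "finite J"
  shows "vinner d (lc J c a) (lc J e a) = (\<Sum>l\<in>J. c l * e l * vinner d (a l) (a l))"
proof -
  have "vinner d (lc J c a) (lc J e a) = (\<Sum>l\<in>J. c l * vinner d (a l) (lc J e a))"
    by (rule vinner_lc_left)
  also have "\<dots> = (\<Sum>l\<in>J. c l * e l * vinner d (a l) (a l))"
    using assms by (intro sum.cong) (auto simp: vinner_lc_orth)
  finally show ?thesis .
qed

lemma vnorm_zero_imp: assumes "x \<in> Rd d" "vinner d x x = 0" shows "x = (\<lambda>k. 0)"
proof
  fix k show "x k = 0"
  proof (cases "k < d")
    case True
    have "(\<Sum>i<d. x i * x i) = 0" using assms by (simp add: vinner_def)
    then have "\<forall>i\<in>{..<d}. x i * x i = 0"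
      by (subst sum_nonneg_eq_0_iff[symmetric]) auto
    with True show ?thesis by auto
  next
    case False then show ?thesis using assms by (auto simp: Rd_def)
  qed
qed

lemma lc_Rd: "(\<And>l. l \<in> J \<Longrightarrow> a l \<in> Rd d) \<Longrightarrow> lc J c a \<in> Rd d"
  by (auto simp: Rd_def lc_def intro!: sum.neutral)



definition Q :: "nat \<Rightarrow> real \<Rightarrow> nat set \<Rightarrow> (nat \<Rightarrow> nat \<Rightarrow> real) \<Rightarrow> (nat \<Rightarrow> real) \<Rightarrow> (nat \<Rightarrow> real) \<Rightarrow> real" where
  "Q d c J a b x = c / 2 * (\<Sum>l\<in>J. (vinner d (a l) x - b l)^2)"

definition gQ :: "nat \<Rightarrow> real \<Rightarrow> nat set \<Rightarrow> (nat \<Rightarrow> nat \<Rightarrow> real) \<Rightarrow> (nat \<Rightarrow> real) \<Rightarrow> (nat \<Rightarrow> real) \<Rightarrow> nat \<Rightarrow> real" where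
  "gQ d c J a b x = lc J (\<lambda>l. c * (vinner d (a l) x - b l)) a"

lemma vnorm_scale: "t \<ge> 0 \<Longrightarrow> vnorm d (\<lambda>k. t * v k) = t * vnorm d v"
proof -
  assume t: "t \<ge> 0"
  have "vnorm d (\<lambda>k. t * v k) = sqrt (t^2 * (\<Sum>i<d. (v i)^2))"
    by (simp add: vnorm_def power_mult_distrib sum_distrib_left)
  also have "\<dots> = t * vnorm d v" using t by (simp add: real_sqrt_mult vnorm_def)
  finally show ?thesis .
qed

lemma vnorm_nonneg: "vnorm d x \<ge> 0" by (simp add: vnorm_def sum_nonneg)

lemma has_grad_Q:
  assumes "finite J" "\<forall>l\<in>J. a l \<in> Rd d" "c \<ge> 0"
  shows "has_grad d (Q d c J a b) x (gQ d c J a b x)"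
proof -
  define A where "A = (\<Sum>l\<in>J. vinner d (a l) (a l))"
  have A0: "A \<ge> 0" unfolding A_def by (intro sum_nonneg vinner_self_nonneg)
  have key: "\<bar>Q d c J a b (vadd x h) - Q d c J a b x - vinner d (gQ d c J a b x) h\<bar> \<le> c/2 * A * (vnorm d h)^2" for h
  proof -
    have lin: "vinner d (a l) (vadd x h) = vinner d (a l) x + vinner d (a l) h" for l
      by (simp add: vadd_def vinner_add_right)
    have "Q d c J a b (vadd x h) - Q d c J a b x - vinner d (gQ d c J a b x) h
        = c/2 * (\<Sum>l\<in>J. (vinner d (a l) h)^2)"
      unfolding Q_def gQ_def lin vinner_lc_left
      by (simp add: power2_eq_square algebra_simps sum.distrib sum_distrib_left sum_subtractf
          vinner_comm[of d h])
    also have "\<dots> \<ge> 0" using assms by (simp add: sum_nonneg)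
    ultimately have e: "\<bar>Q d c J a b (vadd x h) - Q d c J a b x - vinner d (gQ d c J a b x) h\<bar>
        = c/2 * (\<Sum>l\<in>J. (vinner d (a l) h)^2)" by simp
    have "(\<Sum>l\<in>J. (vinner d (a l) h)^2) \<le> (\<Sum>l\<in>J. vinner d (a l) (a l) * vinner d h h)"
      by (intro sum_mono vinner_cs)
    also have "\<dots> = A * (vnorm d h)^2" by (simp add: A_def vnorm_sq sum_distrib_right)
    finally have "c/2 * (\<Sum>l\<in>J. (vinner d (a l) h)^2) \<le> c/2 * (A * (vnorm d h)^2)"
      using assms by (intro mult_left_mono) auto
    then show ?thesis unfolding e by (simp add: mult.assoc)
  qed
  show ?thesis unfolding has_grad_def
  proof (intro conjI allI impI)
    show "gQ d c J a b x \<in> Rd d" unfolding gQ_def using assms by (intro lc_Rd) auto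
  next
    fix e :: real assume e: "e > 0"
    define \<delta> where "\<delta> = e / (c/2 * A + 1)"
    have dpos: "\<delta> > 0" using e A0 assms unfolding \<delta>_def by (intro divide_pos_pos) (auto intro: add_nonneg_pos)
    show "\<exists>\<delta>>0. \<forall>h\<in>Rd d. vnorm d h < \<delta> \<longrightarrow>
        \<bar>Q d c J a b (vadd x h) - Q d c J a b x - vinner d (gQ d c J a b x) h\<bar> \<le> e * vnorm d h"
    proof (intro exI[of _ \<delta>] conjI ballI impI dpos)
      fix h assume "h \<in> Rd d" and hd: "vnorm d h < \<delta>"
      have n0: "vnorm d h \<ge> 0" by (rule vnorm_nonneg)
      have "c/2 * A * (vnorm d h)^2 \<le> (c/2 * A + 1) * vnorm d h * vnorm d h"
      proof -
        have "0 \<le> vnorm d h * vnorm d h" using n0 by simp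
        then have "c/2 * A * (vnorm d h * vnorm d h) \<le> (c/2 * A + 1) * (vnorm d h * vnorm d h)"
          by (intro mult_right_mono) auto
        then show ?thesis by (simp add: power2_eq_square mult.assoc)
      qed
      also have "\<dots> \<le> (c/2 * A + 1) * \<delta> * vnorm d h"
        using n0 A0 assms hd by (intro mult_right_mono mult_left_mono) auto
      also have "(c/2 * A + 1) * \<delta> = e" unfolding \<delta>_def
      proof -
        have "c/2 * A + 1 > 0" using A0 assms by (auto intro: add_nonneg_pos)
        then show "(c/2 * A + 1) * (e / (c/2 * A + 1)) = e" by simp
      qed
      finally show "\<bar>Q d c J a b (vadd x h) - Q d c J a b x - vinner d (gQ d c J a b x) h\<bar> \<le> e * vnorm d h"
        using key[of h] by linarith
    qed
  qed
qed

lemma has_grad_unique: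
  assumes g1: "has_grad d f x g1" and g2: "has_grad d f x g2"
  shows "g1 = g2"
proof (rule ccontr)
  assume ne: "g1 \<noteq> g2"
  define v where "v = (\<lambda>k. g1 k - g2 k)"
  have vR: "v \<in> Rd d" using g1 g2 by (auto simp: has_grad_def Rd_def v_def)
  have "vinner d v v \<noteq> 0"
  proof
    assume "vinner d v v = 0"
    then have "v = (\<lambda>k. 0)" using vR by (intro vnorm_zero_imp)
    then have "\<And>k. g1 k - g2 k = 0" unfolding v_def by (drule_tac x=k in fun_cong) simp
    then have "g1 = g2" by (intro ext) simp
    with ne show False by simp
  qed
  then have Npos: "vnorm d v > 0" using vnorm_nonneg[of d v] vnorm_sq[of d v]
    by (metis less_eq_real_def power_zero_numeral)
  define e where "e = vnorm d v / 4"
  have epos: "e > 0" using Npos by (simp add: e_def)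
  obtain \<delta>1 where d1: "\<delta>1 > 0" "\<forall>h\<in>Rd d. vnorm d h < \<delta>1 \<longrightarrow> \<bar>f (vadd x h) - f x - vinner d g1 h\<bar> \<le> e * vnorm d h"
    using g1 epos unfolding has_grad_def by blast
  obtain \<delta>2 where d2: "\<delta>2 > 0" "\<forall>h\<in>Rd d. vnorm d h < \<delta>2 \<longrightarrow> \<bar>f (vadd x h) - f x - vinner d g2 h\<bar> \<le> e * vnorm d h"
    using g2 epos unfolding has_grad_def by blast
  define \<tau> where "\<tau> = min \<delta>1 \<delta>2 / (2 * vnorm d v)"
  have tpos: "\<tau> > 0" using d1 d2 Npos by (simp add: \<tau>_def)
  define h where "h = (\<lambda>k. \<tau> * v k)"
  have hR: "h \<in> Rd d" using vR by (auto simp: Rd_def h_def)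
  have hn: "vnorm d h = \<tau> * vnorm d v" unfolding h_def using tpos by (simp add: vnorm_scale)
  have "\<tau> * vnorm d v = min \<delta>1 \<delta>2 / 2" using Npos by (simp add: \<tau>_def)
  then have hs: "vnorm d h < \<delta>1" "vnorm d h < \<delta>2" using hn d1 d2 by auto
  have "\<bar>vinner d v h\<bar> \<le> \<bar>f (vadd x h) - f x - vinner d g2 h\<bar> + \<bar>f (vadd x h) - f x - vinner d g1 h\<bar>"
    unfolding v_def by (simp add: vinner_diff_left)
  also have "\<dots> \<le> 2 * e * vnorm d h" using d1(2) d2(2) hR hs by force
  finally have A: "\<bar>vinner d v h\<bar> \<le> 2 * e * vnorm d h" .
  have "vinner d v h = \<tau> * (vnorm d v)^2" unfolding h_def by (simp add: vinner_scale_right vnorm_sq)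
  with A hn have "\<tau> * (vnorm d v)^2 \<le> 2 * e * (\<tau> * vnorm d v)" using tpos Npos by simp
  then have "vnorm d v \<le> 2 * e" using tpos Npos by (simp add: power2_eq_square)
  with Npos show False by (simp add: e_def)
qed

lemma grad_Q:
  assumes "finite J" "\<forall>l\<in>J. a l \<in> Rd d" "c \<ge> 0"
  shows "grad d (Q d c J a b) x = gQ d c J a b x"
proof -
  have h: "has_grad d (Q d c J a b) x (gQ d c J a b x)" using assms by (rule has_grad_Q)
  show ?thesis unfolding grad_def
    by (rule the_equality, rule h, rule has_grad_unique[OF _ h])
qed



definition pQ :: "nat \<Rightarrow> real \<Rightarrow> nat set \<Rightarrow> (nat \<Rightarrow> nat \<Rightarrow> real) \<Rightarrow> (nat \<Rightarrow> real) \<Rightarrow> real \<Rightarrow> (nat \<Rightarrow> real) \<Rightarrow> nat \<Rightarrow> real" where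
  "pQ d c J a b \<gamma> x = (\<lambda>k. x k - lc J (\<lambda>l. c * \<gamma> * ((vinner d (a l) x - b l) / (1 + c * \<gamma> * vinner d (a l) (a l)))) a k)"

lemma prox_Q_key:
  fixes b :: "nat \<Rightarrow> real" and v :: "nat \<Rightarrow> real"
  assumes J: "finite J" and aR: "\<forall>l\<in>J. a l \<in> Rd d" and c: "c \<ge> 0" and g: "\<gamma> > 0"
    and o: "orth d J a" and xR: "x \<in> Rd d"
  defines "u \<equiv> pQ d c J a b \<gamma> x"
  shows "Q d c J a b v + (vnorm d (vsub x v))^2 / (2*\<gamma>)
       = Q d c J a b u + (vnorm d (vsub x u))^2 / (2*\<gamma>)
         + c/2 * (\<Sum>l\<in>J. (vinner d (a l) (\<lambda>k. v k - u k))^2)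
         + vinner d (\<lambda>k. v k - u k) (\<lambda>k. v k - u k) / (2*\<gamma>)"
proof -
  define e where "e l = (vinner d (a l) x - b l) / (1 + c * \<gamma> * vinner d (a l) (a l))" for l
  define \<kappa> where "\<kappa> l = c * \<gamma> * e l" for l
  define y where "y = lc J \<kappa> a"
  define \<delta> where "\<delta> = (\<lambda>k. v k - u k)"
  have u_eq: "u = (\<lambda>k. x k - y k)" unfolding u_def pQ_def y_def \<kappa>_def e_def by simp
  have pos: "1 + c * \<gamma> * vinner d (a l) (a l) > 0" for l
    using c g vinner_self_nonneg[of d "a l"] by (auto intro: add_pos_nonneg)
  have au: "vinner d (a l) u - b l = e l" if l: "l \<in> J" for l
  proof -
    have "vinner d (a l) u = vinner d (a l) x - \<kappa> l * vinner d (a l) (a l)"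
      unfolding u_eq vinner_diff_right y_def using vinner_lc_orth[OF o J l] by simp
    then show ?thesis unfolding \<kappa>_def e_def using pos[of l]
      by (simp add: field_simps)
  qed
  have av: "vinner d (a l) v = vinner d (a l) u + vinner d (a l) \<delta>" for l
    unfolding \<delta>_def vinner_diff_right by simp
  have xv: "vsub x v = (\<lambda>k. y k - \<delta> k)" unfolding vsub_def \<delta>_def u_eq by auto
  have xu: "vsub x u = y" unfolding vsub_def u_eq by auto
  have n1: "(vnorm d (vsub x v))^2 = vinner d y y - 2 * vinner d y \<delta> + vinner d \<delta> \<delta>"
    unfolding vnorm_sq xv vinner_diff_left vinner_diff_right by (simp add: vinner_comm[of d \<delta> y])
  have n2: "(vnorm d (vsub x u))^2 = vinner d y y" unfolding vnorm_sq xu ..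
  have yd: "vinner d y \<delta> = (\<Sum>l\<in>J. \<kappa> l * vinner d (a l) \<delta>)" unfolding y_def by (rule vinner_lc_left)
  have avb: "vinner d (a l) v - b l = e l + vinner d (a l) \<delta>" if "l \<in> J" for l
    using au[OF that] av[of l] by simp
  have Qv: "Q d c J a b v = c/2 * (\<Sum>l\<in>J. (e l + vinner d (a l) \<delta>)^2)"
    unfolding Q_def using avb by (intro arg_cong[where f="\<lambda>s. c/2 * s"] sum.cong) auto
  have Qu: "Q d c J a b u = c/2 * (\<Sum>l\<in>J. (e l)^2)"
    unfolding Q_def using au by (intro arg_cong[where f="\<lambda>s. c/2 * s"] sum.cong) auto
  have "Q d c J a b v - Q d c J a b u = c * (\<Sum>l\<in>J. e l * vinner d (a l) \<delta>) + c/2 * (\<Sum>l\<in>J. (vinner d (a l) \<delta>)^2)"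
    unfolding Qv Qu by (simp add: power2_eq_square algebra_simps sum.distrib sum_distrib_left sum_subtractf)
  moreover have "vinner d y \<delta> / \<gamma> = c * (\<Sum>l\<in>J. e l * vinner d (a l) \<delta>)"
    unfolding yd \<kappa>_def using g by (simp add: sum_distrib_left sum_divide_distrib algebra_simps)
  ultimately show ?thesis unfolding n1 n2 \<delta>_def[symmetric] using g
    by (simp add: field_simps)
qed

lemma prox_Q:
  assumes J: "finite J" and aR: "\<forall>l\<in>J. a l \<in> Rd d" and c: "c \<ge> 0" and g: "\<gamma> > 0"
    and o: "orth d J a" and xR: "x \<in> Rd d"
  shows "is_prox d \<gamma> (Q d c J a b) x (pQ d c J a b \<gamma> x)"
    and "\<And>u'. is_prox d \<gamma> (Q d c J a b) x u' \<Longrightarrow> u' = pQ d c J a b \<gamma> x"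
proof -
  define u where "u = pQ d c J a b \<gamma> x"
  have uR: "u \<in> Rd d" unfolding u_def pQ_def using xR lc_Rd[of J a d] aR
    by (auto simp: Rd_def)
  note key = prox_Q_key[where J=J and a=a and d=d and c=c and \<gamma>=\<gamma> and x=x and b=b, OF J aR c g o xR, folded u_def]
  have ge: "Q d c J a b u + (vnorm d (vsub x u))^2 / (2*\<gamma>) + vinner d (\<lambda>k. v k - u k) (\<lambda>k. v k - u k) / (2*\<gamma>)
     \<le> Q d c J a b v + (vnorm d (vsub x v))^2 / (2*\<gamma>)" for v
  proof -
    have "0 \<le> c/2 * (\<Sum>l\<in>J. (vinner d (a l) (\<lambda>k. v k - u k))^2)"
      using c by (intro mult_nonneg_nonneg sum_nonneg) auto
    then show ?thesis using key[of v] by linarith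
  qed
  show "is_prox d \<gamma> (Q d c J a b) x (pQ d c J a b \<gamma> x)"
    unfolding is_prox_def u_def[symmetric]
  proof (intro conjI ballI uR)
    fix v assume "v \<in> Rd d"
    have "0 \<le> vinner d (\<lambda>k. v k - u k) (\<lambda>k. v k - u k) / (2*\<gamma>)"
      using g vinner_self_nonneg by simp
    then show "Q d c J a b u + (vnorm d (vsub x u))^2 / (2*\<gamma>) \<le> Q d c J a b v + (vnorm d (vsub x v))^2 / (2*\<gamma>)"
      using ge[of v] by linarith
  qed
  fix u' assume pu: "is_prox d \<gamma> (Q d c J a b) x u'"
  then have u'R: "u' \<in> Rd d" and le: "Q d c J a b u' + (vnorm d (vsub x u'))^2 / (2*\<gamma>) \<le> Q d c J a b u + (vnorm d (vsub x u))^2 / (2*\<gamma>)"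
    using uR unfolding is_prox_def by auto
  have "vinner d (\<lambda>k. u' k - u k) (\<lambda>k. u' k - u k) / (2*\<gamma>) \<le> 0" using ge[of u'] le by linarith
  then have "vinner d (\<lambda>k. u' k - u k) (\<lambda>k. u' k - u k) = 0"
    using g vinner_self_nonneg[of d "\<lambda>k. u' k - u k"] by (simp add: divide_le_0_iff)
  moreover have "(\<lambda>k. u' k - u k) \<in> Rd d" using uR u'R by (auto simp: Rd_def)
  ultimately have "(\<lambda>k. u' k - u k) = (\<lambda>k. 0)" using vnorm_zero_imp by blast
  then have "\<And>k. u' k - u k = 0" by (drule_tac x=k in fun_cong) simp
  then show "u' = pQ d c J a b \<gamma> x" unfolding u_def[symmetric] by (intro ext) simp
qed

lemma prox_Q_eq:
  assumes "finite J" "\<forall>l\<in>J. a l \<in> Rd d" "c \<ge> 0" "\<gamma> > 0" "orth d J a" "x \<in> Rd d"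
  shows "prox d \<gamma> (Q d c J a b) x = pQ d c J a b \<gamma> x"
    and "\<exists>!u. is_prox d \<gamma> (Q d c J a b) x u"
proof -
  note p = prox_Q[where J=J and a=a and d=d and c=c and \<gamma>=\<gamma> and x=x and b=b, OF assms]
  show "prox d \<gamma> (Q d c J a b) x = pQ d c J a b \<gamma> x" unfolding prox_def
    apply (rule the_equality)
     apply (rule p(1))
    apply (erule p(2))
    done
  show "\<exists>!u. is_prox d \<gamma> (Q d c J a b) x u" using p by blast
qed



definition ev :: "nat \<Rightarrow> nat \<Rightarrow> real" where "ev j = (\<lambda>k. if k = j then 1 else 0)"

definition hv :: "nat \<Rightarrow> (nat \<Rightarrow> real) \<Rightarrow> nat \<Rightarrow> real" where
  "hv d x0 = (\<lambda>k. x0 k - vnorm d x0 * ev 0 k)"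

definition HH :: "nat \<Rightarrow> (nat \<Rightarrow> real) \<Rightarrow> (nat \<Rightarrow> real) \<Rightarrow> nat \<Rightarrow> real" where
  "HH d x0 z = (if vinner d (hv d x0) (hv d x0) = 0 then z
     else (\<lambda>k. z k - 2 * vinner d (hv d x0) z / vinner d (hv d x0) (hv d x0) * hv d x0 k))"

definition W :: "nat \<Rightarrow> (nat \<Rightarrow> real) \<Rightarrow> nat \<Rightarrow> nat \<Rightarrow> real" where
  "W d x0 j = (if 1 \<le> j \<and> j < d then HH d x0 (ev j) else (\<lambda>_. 0))"

lemma vinner_ev: "j < d \<Longrightarrow> vinner d (ev j) z = z j"
proof -
  assume j: "j < d"
  have "vinner d (ev j) z = (\<Sum>i<d. if i = j then z i else 0)"
    unfolding vinner_def ev_def by (intro sum.cong) auto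
  also have "\<dots> = z j" using j by (simp add: sum.delta)
  finally show ?thesis .
qed

lemma ev_Rd: "j < d \<Longrightarrow> ev j \<in> Rd d" by (auto simp: Rd_def ev_def)

lemma hv_Rd: "x0 \<in> Rd d \<Longrightarrow> 0 < d \<Longrightarrow> hv d x0 \<in> Rd d"
  by (auto simp: Rd_def hv_def ev_def)

lemma HH_Rd: "x0 \<in> Rd d \<Longrightarrow> 0 < d \<Longrightarrow> z \<in> Rd d \<Longrightarrow> HH d x0 z \<in> Rd d"
  using hv_Rd[of x0 d] by (auto simp: Rd_def HH_def)

lemma W_Rd: "x0 \<in> Rd d \<Longrightarrow> W d x0 j \<in> Rd d"
  unfolding W_def using HH_Rd ev_Rd by (auto simp: Rd_def)

lemma HH_inner:
  assumes N: "vinner d (hv d x0) (hv d x0) \<noteq> 0"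
  shows "vinner d (HH d x0 y) (HH d x0 z) = vinner d y z"
proof -
  define v where "v = hv d x0"
  define N where "N = vinner d v v"
  have N0: "N \<noteq> 0" using N by (simp add: N_def v_def)
  define \<alpha> where "\<alpha> y = 2 * vinner d v y / N" for y
  have H: "HH d x0 y = (\<lambda>k. y k - \<alpha> y * v k)" for y
    unfolding HH_def \<alpha>_def using N by (simp add: v_def N_def)
  have "vinner d (HH d x0 y) (HH d x0 z) =
    vinner d y z - \<alpha> z * vinner d y v - \<alpha> y * (vinner d v z - \<alpha> z * N)"
    unfolding H vinner_diff_left vinner_diff_right vinner_scale_left vinner_scale_right N_def
    by (simp add: algebra_simps)
  also have "\<dots> = vinner d y z - 2 * vinner d v z / N * vinner d y v - 2 * vinner d v y / N * vinner d v z
     + 2 * vinner d v y / N * (2 * vinner d v z / N) * N"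
    unfolding \<alpha>_def by (simp add: algebra_simps)
  also have "\<dots> = vinner d y z" using N0 by (simp add: field_simps vinner_comm[of d y v] power2_eq_square)
  finally show ?thesis .
qed

lemma W_orth:
  assumes "x0 \<in> Rd d"
  shows "vinner d (W d x0 j) (W d x0 j') = (if j = j' \<and> 1 \<le> j \<and> j < d then 1 else 0)"
proof (cases "1 \<le> j \<and> j < d \<and> 1 \<le> j' \<and> j' < d")
  case True
  then have "vinner d (W d x0 j) (W d x0 j') = vinner d (ev j) (ev j')"
  proof -
    have "W d x0 j = HH d x0 (ev j)" "W d x0 j' = HH d x0 (ev j')" using True by (auto simp: W_def)
    then show ?thesis
      by (cases "vinner d (hv d x0) (hv d x0) = 0") (simp add: HH_def, simp add: HH_inner)
  qed
  also have "\<dots> = ev j' j" using True by (simp add: vinner_ev)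
  finally show ?thesis using True by (auto simp: ev_def)
next
  case False then show ?thesis by (auto simp: W_def)
qed

lemma W_x0:
  assumes x0: "x0 \<in> Rd d"
  shows "vinner d (W d x0 j) x0 = 0"
proof (cases "1 \<le> j \<and> j < d")
  case False then show ?thesis by (auto simp: W_def)
next
  case True
  then have d0: "0 < d" by simp
  define v where "v = hv d x0"
  define r where "r = vnorm d x0"
  have vj: "v j = x0 j" using True by (simp add: v_def hv_def ev_def)
  show ?thesis
  proof (cases "vinner d v v = 0")
    case True0: True
    have "v \<in> Rd d" unfolding v_def using x0 d0 by (rule hv_Rd)
    then have "v = (\<lambda>k. 0)" using True0 vnorm_zero_imp by blast
    then have "v j = 0" by simp
    then show ?thesis using True True0 vj vinner_ev[of j d x0] vinner_comm[of d "ev j" x0]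
      by (simp add: W_def HH_def v_def[symmetric])
  next
    case False
    have rr: "vinner d x0 x0 = r^2" by (simp add: r_def vnorm_sq)
    have e00: "vinner d (ev 0) (ev 0) = 1" using d0 vinner_ev[of 0 d "ev 0"] by (simp add: ev_def)
    have vx: "vinner d v x0 = r^2 - r * x0 0"
      unfolding v_def hv_def vinner_diff_left vinner_scale_left r_def[symmetric] rr
      using d0 by (simp add: vinner_ev)
    have vv: "vinner d v v = 2 * r^2 - 2 * r * x0 0"
      unfolding v_def hv_def vinner_diff_left vinner_diff_right vinner_scale_left vinner_scale_right
        r_def[symmetric] rr e00
      using d0 by (simp add: vinner_ev vinner_comm[of d x0 "ev 0"] power2_eq_square algebra_simps)
    have ratio: "2 * vinner d v x0 / vinner d v v = 1" using False vx vv by (simp add: field_simps)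
    have "vinner d (W d x0 j) x0 = vinner d (ev j) x0 - 2 * vinner d v (ev j) / vinner d v v * vinner d v x0"
    proof -
      have "W d x0 j = (\<lambda>k. ev j k - (2 * vinner d v (ev j) / vinner d v v) * v k)"
        using True False by (simp add: W_def HH_def v_def[symmetric])
      then show ?thesis by (simp only: vinner_diff_left vinner_scale_left)
    qed
    also have "\<dots> = x0 j - v j * (2 * vinner d v x0 / vinner d v v)"
      using True by (simp add: vinner_ev vinner_comm[of d v "ev j"])
    also have "\<dots> = 0" using ratio vj by simp
    finally show ?thesis .
  qed
qed

lemma bessel:
  assumes x0: "x0 \<in> Rd d" and that: "finite S" "S \<subseteq> {1..<d}"
  shows "(\<Sum>j\<in>S. (vinner d (W d x0 j) z)^2) \<le> vinner d z z"
proof -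
  define \<beta> where "\<beta> j = vinner d (W d x0 j) z" for j
  define y where "y = lc S \<beta> (W d x0)"
  have o: "orth d S (W d x0)" unfolding orth_def using x0 by (auto simp: W_orth)
  have yy: "vinner d y y = (\<Sum>j\<in>S. (\<beta> j)^2)"
    unfolding y_def using vinner_lc_lc_orth[OF o that(1)] that(2) x0
    by (auto simp: W_orth power2_eq_square intro!: sum.cong)
  have yz: "vinner d y z = (\<Sum>j\<in>S. (\<beta> j)^2)"
    unfolding y_def vinner_lc_left by (simp add: \<beta>_def power2_eq_square)
  have "0 \<le> vinner d (\<lambda>k. z k - y k) (\<lambda>k. z k - y k)" by (rule vinner_self_nonneg)
  also have "\<dots> = vinner d z z - 2 * vinner d y z + vinner d y y"
    by (simp add: vinner_diff_left vinner_diff_right vinner_comm[of d z y])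
  finally show ?thesis unfolding yy yz \<beta>_def by simp
qed



definition Pz :: "nat \<Rightarrow> (nat \<Rightarrow> real) \<Rightarrow> nat \<Rightarrow> (nat \<Rightarrow> real) \<Rightarrow> bool" where
  "Pz d x0 k x \<longleftrightarrow> x \<in> Rd d \<and> (\<forall>j. k < j \<longrightarrow> vinner d (W d x0 j) x = 0)"

definition lnk :: "nat \<Rightarrow> (nat \<Rightarrow> real) \<Rightarrow> nat \<Rightarrow> nat \<Rightarrow> real" where
  "lnk d x0 l = (\<lambda>k. W d x0 (Suc l) k - W d x0 l k)"

lemma W0[simp]: "W d x0 0 = (\<lambda>_. 0)" by (simp add: W_def)

lemma lnk_Rd: "x0 \<in> Rd d \<Longrightarrow> lnk d x0 l \<in> Rd d"
  using W_Rd[of x0 d] by (auto simp: Rd_def lnk_def)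

lemma W_lnk: "x0 \<in> Rd d \<Longrightarrow> vinner d (W d x0 j) (lnk d x0 l) =
   (if j = Suc l \<and> 1 \<le> j \<and> j < d then 1 else 0) - (if j = l \<and> 1 \<le> j \<and> j < d then 1 else 0)"
  unfolding lnk_def vinner_diff_right by (simp add: W_orth)

lemma lnk_x: "vinner d (lnk d x0 l) x = vinner d (W d x0 (Suc l)) x - vinner d (W d x0 l) x"
  unfolding lnk_def vinner_diff_left ..

lemma Pz_mono: "k \<le> k' \<Longrightarrow> Pz d x0 k x \<Longrightarrow> Pz d x0 k' x"
  unfolding Pz_def by auto

lemma Pz_diff: "Pz d x0 k x \<Longrightarrow> Pz d x0 k y \<Longrightarrow> Pz d x0 k (\<lambda>i. x i - y i)"
  unfolding Pz_def by (auto simp: Rd_def vinner_diff_right)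

lemma Pz_span:
  assumes "\<forall>v\<in>S. Pz d x0 k v" "in_span S x"
  shows "Pz d x0 k x"
proof -
  obtain F c where F: "finite F" "F \<subseteq> S" "x = (\<lambda>k. \<Sum>v\<in>F. c v * v k)"
    using assms(2) unfolding in_span_def by blast
  have x: "x = lc F c id" unfolding F(3) lc_def by simp
  show ?thesis unfolding Pz_def
  proof (intro conjI allI impI)
    show "x \<in> Rd d" unfolding x using assms(1) F(2) by (intro lc_Rd) (auto simp: Pz_def)
    fix j assume "k < j"
    then show "vinner d (W d x0 j) x = 0" unfolding x vinner_lc_right
      using assms(1) F(2) by (intro sum.neutral) (auto simp: Pz_def)
  qed
qed

lemma Pz_step_hard:
  assumes x0: "x0 \<in> Rd d" and P: "Pz d x0 k x" and J: "finite J" and b: "\<forall>l\<in>J. 1 \<le> l \<longrightarrow> b l = 0"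
  shows "Pz d x0 (Suc k) (lc J (\<lambda>l. \<phi> l * (vinner d (lnk d x0 l) x - b l)) (lnk d x0))"
  unfolding Pz_def
proof (intro conjI allI impI)
  show "lc J (\<lambda>l. \<phi> l * (vinner d (lnk d x0 l) x - b l)) (lnk d x0) \<in> Rd d"
    using lnk_Rd[OF x0] by (intro lc_Rd) auto
  fix j assume j: "Suc k < j"
  show "vinner d (W d x0 j) (lc J (\<lambda>l. \<phi> l * (vinner d (lnk d x0 l) x - b l)) (lnk d x0)) = 0"
    unfolding vinner_lc_right
  proof (intro sum.neutral ballI)
    fix l assume l: "l \<in> J"
    show "\<phi> l * (vinner d (lnk d x0 l) x - b l) * vinner d (W d x0 j) (lnk d x0 l) = 0"
    proof (cases "j = Suc l \<or> j = l")
      case True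
      then have "k < l" "1 \<le> l" using j by auto
      then have "b l = 0" "vinner d (lnk d x0 l) x = 0" using b l P unfolding lnk_x Pz_def by auto
      then show ?thesis by simp
    next
      case False then show ?thesis using x0 by (simp add: W_lnk)
    qed
  qed
qed

lemma Pz_step_easy:
  assumes x0: "x0 \<in> Rd d" and P: "Pz d x0 k x" and b: "\<forall>l\<in>J. l = 0 \<and> b l = 0"
  shows "Pz d x0 k (lc J (\<lambda>l. \<phi> l * (vinner d (lnk d x0 l) x - b l)) (lnk d x0))"
  unfolding Pz_def
proof (intro conjI allI impI)
  show "lc J (\<lambda>l. \<phi> l * (vinner d (lnk d x0 l) x - b l)) (lnk d x0) \<in> Rd d"
    using lnk_Rd[OF x0] by (intro lc_Rd) auto
  fix j assume j: "k < j"
  show "vinner d (W d x0 j) (lc J (\<lambda>l. \<phi> l * (vinner d (lnk d x0 l) x - b l)) (lnk d x0)) = 0"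
    unfolding vinner_lc_right
  proof (intro sum.neutral ballI)
    fix l assume l: "l \<in> J"
    then have l0: "l = 0" "b l = 0" using b by auto
    show "\<phi> l * (vinner d (lnk d x0 l) x - b l) * vinner d (W d x0 j) (lnk d x0 l) = 0"
    proof (cases "j = 1")
      case True
      then have "vinner d (lnk d x0 l) x = 0" using l0 P j unfolding lnk_x Pz_def by auto
      then show ?thesis using l0 by simp
    next
      case False then show ?thesis using x0 l0 by (simp add: W_lnk)
    qed
  qed
qed

definition hits :: "nat set \<Rightarrow> (nat \<Rightarrow> nat) \<Rightarrow> nat \<Rightarrow> nat" where
  "hits H \<iota> t = card {s\<in>{1..t}. \<iota> s \<in> H}"

lemma hits_0[simp]: "hits H \<iota> 0 = 0" by (simp add: hits_def)

lemma hits_Suc: "hits H \<iota> (Suc t) = hits H \<iota> t + (if \<iota> (Suc t) \<in> H then 1 else 0)"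
proof -
  have "{s\<in>{1..Suc t}. \<iota> s \<in> H} = {s\<in>{1..t}. \<iota> s \<in> H} \<union> (if \<iota> (Suc t) \<in> H then {Suc t} else {})"
    by (auto simp: le_Suc_eq)
  then show ?thesis unfolding hits_def by (auto simp: card_insert_if)
qed

lemma hits_mono: "s \<le> t \<Longrightarrow> hits H \<iota> s \<le> hits H \<iota> t"
  unfolding hits_def by (intro card_mono) auto



lemma hist_len: "length (pifo_hist \<gamma> x0 R d fs \<iota> t) = t"
  by (induction t) (auto simp: Let_def)

lemma hist_take: "s \<le> t \<Longrightarrow> take s (pifo_hist \<gamma> x0 R d fs \<iota> t) = pifo_hist \<gamma> x0 R d fs \<iota> s"
proof (induction t)
  case 0 then show ?case by simp
next
  case (Suc t)
  show ?case
  proof (cases "s = Suc t")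
    case True then show ?thesis using hist_len by (metis order_refl take_all)
  next
    case False
    then have "s \<le> t" using Suc by simp
    then show ?thesis using Suc hist_len[of \<gamma> x0 R d fs \<iota> t] by (simp add: Let_def)
  qed
qed

lemma hist_nth:
  assumes "s < t"
  shows "pifo_hist \<gamma> x0 R d fs \<iota> t ! s =
    (\<iota> (Suc s), fs (\<iota> (Suc s)) (pifo_iter \<gamma> x0 R d fs \<iota> s),
     grad d (fs (\<iota> (Suc s))) (pifo_iter \<gamma> x0 R d fs \<iota> s),
     prox d (\<gamma> (Suc s)) (fs (\<iota> (Suc s))) (pifo_iter \<gamma> x0 R d fs \<iota> s))"
proof -
  have "pifo_hist \<gamma> x0 R d fs \<iota> t ! s = take (Suc s) (pifo_hist \<gamma> x0 R d fs \<iota> t) ! s"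
    using assms by simp
  also have "\<dots> = pifo_hist \<gamma> x0 R d fs \<iota> (Suc s) ! s"
    using assms by (simp add: hist_take)
  finally show ?thesis
    using hist_len[of \<gamma> x0 R d fs \<iota> s] by (simp add: Let_def nth_append pifo_iter_def)
qed



definition step_ok :: "nat \<Rightarrow> (nat \<Rightarrow> real) \<Rightarrow> (nat \<Rightarrow> (nat \<Rightarrow> real) \<Rightarrow> real) \<Rightarrow> nat set \<Rightarrow> (nat \<Rightarrow> real) \<Rightarrow> bool" where
  "step_ok d x0 fs H \<gamma> \<longleftrightarrow> (\<forall>i k x t. 1 \<le> t \<longrightarrow> Pz d x0 k x \<longrightarrow>
      Pz d x0 (k + (if i \<in> H then 1 else 0)) (grad d (fs i) x) \<and>
      Pz d x0 (k + (if i \<in> H then 1 else 0)) (prox d (\<gamma> t) (fs i) x))"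

lemma iter_Pz:
  assumes alg: "pifo_algorithm n p \<gamma> x0 R" and st: "step_ok d (x0 d) fs H \<gamma>"
  shows "Pz d (x0 d) (hits H \<iota> t) (pifo_iter \<gamma> x0 R d fs \<iota> t)"
proof (induction t rule: less_induct)
  case (less t)
  have x0R: "x0 d \<in> Rd d" using alg by (simp add: pifo_algorithm_def)
  have P0: "Pz d (x0 d) k (x0 d)" for k using W_x0[OF x0R] x0R
    by (simp add: Pz_def vinner_comm[of d _ "x0 d"])
  show ?case
  proof (cases "t = 0")
    case True then show ?thesis using P0 by (simp add: pifo_iter_def)
  next
    case False
    define h where "h = pifo_hist \<gamma> x0 R d fs \<iota> t"
    have hne: "h \<noteq> []" using False hist_len[of \<gamma> x0 R d fs \<iota> t] by (auto simp: h_def)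
    have it: "pifo_iter \<gamma> x0 R d fs \<iota> t = R d h" using False by (simp add: pifo_iter_def h_def)
    have sp: "in_span (pifo_span_set x0 R d h) (R d h)"
      using alg hne by (simp add: pifo_algorithm_def)
    have step: "Pz d (x0 d) (hits H \<iota> t) (grad d (fs (\<iota> (Suc s))) (pifo_iter \<gamma> x0 R d fs \<iota> s)) \<and>
                Pz d (x0 d) (hits H \<iota> t) (prox d (\<gamma> (Suc s)) (fs (\<iota> (Suc s))) (pifo_iter \<gamma> x0 R d fs \<iota> s))"
      if s: "s < t" for s
    proof -
      have "Pz d (x0 d) (hits H \<iota> s) (pifo_iter \<gamma> x0 R d fs \<iota> s)" using less.IH[OF s] .
      then have "Pz d (x0 d) (hits H \<iota> (Suc s)) (grad d (fs (\<iota> (Suc s))) (pifo_iter \<gamma> x0 R d fs \<iota> s)) \<and>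
                Pz d (x0 d) (hits H \<iota> (Suc s)) (prox d (\<gamma> (Suc s)) (fs (\<iota> (Suc s))) (pifo_iter \<gamma> x0 R d fs \<iota> s))"
        using st[unfolded step_ok_def, rule_format, of "Suc s" "hits H \<iota> s" "pifo_iter \<gamma> x0 R d fs \<iota> s" "\<iota> (Suc s)"]
        unfolding hits_Suc by simp
      moreover have "hits H \<iota> (Suc s) \<le> hits H \<iota> t" using s by (intro hits_mono) simp
      ultimately show ?thesis using Pz_mono by metis
    qed
    have "\<forall>v\<in>pifo_span_set x0 R d h. Pz d (x0 d) (hits H \<iota> t) v"
    proof
      fix v assume "v \<in> pifo_span_set x0 R d h"
      then consider "v = x0 d" | s where "1 \<le> s" "s < t" "v = R d (take s h)"
        | s where "s < t" "v = fst (snd (snd (h ! s)))" | s where "s < t" "v = snd (snd (snd (h ! s)))"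
        unfolding pifo_span_set_def using hist_len[of \<gamma> x0 R d fs \<iota> t] by (auto simp: h_def)
      then show "Pz d (x0 d) (hits H \<iota> t) v"
      proof cases
        case 1 then show ?thesis using P0 by simp
      next
        case (2 s)
        then have "v = pifo_iter \<gamma> x0 R d fs \<iota> s"
          by (simp add: h_def hist_take pifo_iter_def)
        moreover have "Pz d (x0 d) (hits H \<iota> s) (pifo_iter \<gamma> x0 R d fs \<iota> s)" using less.IH[OF 2(2)] .
        moreover have "hits H \<iota> s \<le> hits H \<iota> t" using 2 by (intro hits_mono) simp
        ultimately show ?thesis using Pz_mono by metis
      next
        case (3 s) then show ?thesis using step[of s] by (simp add: h_def hist_nth)
      next
        case (4 s) then show ?thesis using step[of s] by (simp add: h_def hist_nth)
      qed
    qed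
    then show ?thesis unfolding it using sp by (rule Pz_span)
  qed
qed



lemma weights_sum:
  fixes g :: "nat \<Rightarrow> nat \<Rightarrow> real"
  assumes "\<And>s j. g s j \<ge> 0"
  shows "(\<Sum>\<iota>\<in>PiE {1..t} (\<lambda>_. {..<n}). \<Prod>s\<in>{1..t}. g s (\<iota> s)) = (\<Prod>s\<in>{1..t}. \<Sum>j<n. g s j)"
  using prod_sum_PiE[of "{1..t}" "\<lambda>_. {..<n}" g] by simp

lemma expect_hits:
  assumes sp: "(\<Sum>j<n. p j) = 1"
  shows "(\<Sum>\<iota>\<in>PiE {1..t} (\<lambda>_. {..<n}). (\<Prod>s\<in>{1..t}. p (\<iota> s)) * real (hits H \<iota> t))
       = real t * (\<Sum>j<n. if j \<in> H then p j else 0)"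
proof -
  define q where "q = (\<Sum>j<n. if j \<in> H then p j else 0)"
  have h: "real (hits H \<iota> t) = (\<Sum>s\<in>{1..t}. if \<iota> s \<in> H then 1 else 0)" for \<iota>
    unfolding hits_def by (simp only: real_of_card sum.inter_filter[OF finite_atLeastAtMost])
  have inner: "(\<Sum>\<iota>\<in>PiE {1..t} (\<lambda>_. {..<n}). (\<Prod>r\<in>{1..t}. p (\<iota> r)) * (if \<iota> s \<in> H then 1 else 0)) = q"
    if s: "s \<in> {1..t}" for s
  proof -
    define g where "g r j = (if r = s then (if j \<in> H then p j else 0) else p j)" for r j
    have "(\<Prod>r\<in>{1..t}. p (\<iota> r)) * (if \<iota> s \<in> H then 1 else 0) = (\<Prod>r\<in>{1..t}. g r (\<iota> r))" for \<iota>
    proof -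
      have "(\<Prod>r\<in>{1..t}. g r (\<iota> r)) = g s (\<iota> s) * (\<Prod>r\<in>{1..t}-{s}. g r (\<iota> r))"
        using s by (simp add: prod.remove)
      also have "(\<Prod>r\<in>{1..t}-{s}. g r (\<iota> r)) = (\<Prod>r\<in>{1..t}-{s}. p (\<iota> r))"
        by (intro prod.cong) (auto simp: g_def)
      also have "(\<Prod>r\<in>{1..t}. p (\<iota> r)) = p (\<iota> s) * (\<Prod>r\<in>{1..t}-{s}. p (\<iota> r))"
        using s by (simp add: prod.remove)
      ultimately show ?thesis by (simp add: g_def)
    qed
    then have "(\<Sum>\<iota>\<in>PiE {1..t} (\<lambda>_. {..<n}). (\<Prod>r\<in>{1..t}. p (\<iota> r)) * (if \<iota> s \<in> H then 1 else 0))
        = (\<Sum>\<iota>\<in>PiE {1..t} (\<lambda>_. {..<n}). \<Prod>r\<in>{1..t}. g r (\<iota> r))" by simp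
    also have "\<dots> = (\<Prod>r\<in>{1..t}. \<Sum>j<n. g r j)" using prod_sum_PiE[of "{1..t}" "\<lambda>_. {..<n}" g] by simp
    also have "\<dots> = (\<Sum>j<n. g s j) * (\<Prod>r\<in>{1..t}-{s}. \<Sum>j<n. g r j)"
      using s by (simp add: prod.remove)
    also have "(\<Prod>r\<in>{1..t}-{s}. \<Sum>j<n. g r j) = 1"
      using sp by (intro prod.neutral) (auto simp: g_def)
    also have "(\<Sum>j<n. g s j) = q" by (simp add: g_def q_def)
    finally show ?thesis by simp
  qed
  have "(\<Sum>\<iota>\<in>PiE {1..t} (\<lambda>_. {..<n}). (\<Prod>s\<in>{1..t}. p (\<iota> s)) * real (hits H \<iota> t))
     = (\<Sum>\<iota>\<in>PiE {1..t} (\<lambda>_. {..<n}). \<Sum>s\<in>{1..t}. (\<Prod>r\<in>{1..t}. p (\<iota> r)) * (if \<iota> s \<in> H then 1 else 0))"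
    unfolding h by (simp add: sum_distrib_left)
  also have "\<dots> = (\<Sum>s\<in>{1..t}. \<Sum>\<iota>\<in>PiE {1..t} (\<lambda>_. {..<n}). (\<Prod>r\<in>{1..t}. p (\<iota> r)) * (if \<iota> s \<in> H then 1 else 0))"
    by (rule sum.swap)
  also have "\<dots> = (\<Sum>s\<in>{1..t}. q)" using inner by (intro sum.cong) auto
  finally show ?thesis by (simp add: q_def)
qed



lemma expect_bound:
  assumes alg: "pifo_algorithm n p \<gamma> x0 R"
    and pt: "\<And>\<iota>. F (pifo_iter \<gamma> x0 R d fs \<iota> t) - Fs \<ge> G - G * real (hits H \<iota> t) / (M + 1)"
  shows "pifo_expect n p \<gamma> x0 R d fs F t - Fs \<ge> G - G * (real t * (\<Sum>j<n. if j \<in> H then p j else 0)) / (M + 1)"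
proof -
  have p0: "\<And>j. p j \<ge> 0" and sp: "(\<Sum>j<n. p j) = 1" using alg by (auto simp: pifo_algorithm_def)
  define w where "w \<iota> = (\<Prod>s\<in>{1..t}. p (\<iota> s))" for \<iota>
  define P where "P = PiE {1..t} (\<lambda>_. {..<n::nat})"
  have w0: "w \<iota> \<ge> 0" for \<iota> unfolding w_def using p0 by (intro prod_nonneg) auto
  have ws: "(\<Sum>\<iota>\<in>P. w \<iota>) = 1" unfolding w_def P_def
    by (subst weights_sum) (use p0 sp in auto)
  have wh: "(\<Sum>\<iota>\<in>P. w \<iota> * real (hits H \<iota> t)) = real t * (\<Sum>j<n. if j \<in> H then p j else 0)"
    unfolding w_def P_def by (rule expect_hits[OF sp])
  have "pifo_expect n p \<gamma> x0 R d fs F t - Fs = (\<Sum>\<iota>\<in>P. w \<iota> * (F (pifo_iter \<gamma> x0 R d fs \<iota> t) - Fs))"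
    unfolding pifo_expect_def w_def[symmetric] P_def[symmetric]
    using ws by (simp add: algebra_simps sum_subtractf sum_distrib_right[symmetric] sum_distrib_left[symmetric])
  also have "\<dots> \<ge> (\<Sum>\<iota>\<in>P. w \<iota> * (G - G * real (hits H \<iota> t) / (M + 1)))"
    using w0 pt by (intro sum_mono mult_left_mono) auto
  moreover have "(\<Sum>\<iota>\<in>P. w \<iota> * (G - G * real (hits H \<iota> t) / (M + 1)))
      = G * (\<Sum>\<iota>\<in>P. w \<iota>) - G / (M + 1) * (\<Sum>\<iota>\<in>P. w \<iota> * real (hits H \<iota> t))"
    by (simp add: algebra_simps sum_subtractf sum_distrib_left sum_divide_distrib)
  ultimately show ?thesis unfolding ws wh by simp
qed



definition comp_ok :: "nat \<Rightarrow> (nat \<Rightarrow> real) \<Rightarrow> real \<Rightarrow> nat set \<Rightarrow> (nat \<Rightarrow> real) \<Rightarrow> bool \<Rightarrow> bool" where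
  "comp_ok d x0 c J b hard \<longleftrightarrow> finite J \<and> c \<ge> 0 \<and> orth d J (lnk d x0) \<and>
     (if hard then (\<forall>l\<in>J. 1 \<le> l \<longrightarrow> b l = 0) else (\<forall>l\<in>J. l = 0 \<and> b l = 0))"

lemma lc_cong: "(\<And>l. l \<in> J \<Longrightarrow> c l = c' l) \<Longrightarrow> lc J c a = lc J c' a"
  unfolding lc_def by (intro ext sum.cong) auto

lemma comp_step:
  assumes x0: "x0 \<in> Rd d" and ok: "comp_ok d x0 c J b hard" and P: "Pz d x0 k x" and g: "\<gamma> > 0"
  shows "Pz d x0 (k + (if hard then 1 else 0)) (grad d (Q d c J (lnk d x0) b) x)"
    and "Pz d x0 (k + (if hard then 1 else 0)) (prox d \<gamma> (Q d c J (lnk d x0) b) x)"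
proof -
  have J: "finite J" and c: "c \<ge> 0" and o: "orth d J (lnk d x0)" using ok by (auto simp: comp_ok_def)
  have aR: "\<forall>l\<in>J. lnk d x0 l \<in> Rd d" using lnk_Rd[OF x0] by auto
  have xR: "x \<in> Rd d" using P by (simp add: Pz_def)
  have gen: "Pz d x0 (k + (if hard then 1 else 0)) (lc J (\<lambda>l. \<phi> l * (vinner d (lnk d x0 l) x - b l)) (lnk d x0))" for \<phi>
  proof (cases hard)
    case True
    then show ?thesis using Pz_step_hard[OF x0 P J, of b \<phi>] ok by (simp add: comp_ok_def)
  next
    case False
    then show ?thesis using Pz_step_easy[OF x0 P, of J b \<phi>] ok by (simp add: comp_ok_def)
  qed
  have "grad d (Q d c J (lnk d x0) b) x = gQ d c J (lnk d x0) b x"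
    using J aR c by (rule grad_Q)
  then show "Pz d x0 (k + (if hard then 1 else 0)) (grad d (Q d c J (lnk d x0) b) x)"
    using gen[of "\<lambda>l. c"] by (simp add: gQ_def)
  have "prox d \<gamma> (Q d c J (lnk d x0) b) x = pQ d c J (lnk d x0) b \<gamma> x"
    using J aR c g o xR by (rule prox_Q_eq(1))
  also have "\<dots> = (\<lambda>i. x i - lc J (\<lambda>l. (c * \<gamma> / (1 + c * \<gamma> * vinner d (lnk d x0 l) (lnk d x0 l))) *
        (vinner d (lnk d x0 l) x - b l)) (lnk d x0) i)"
    unfolding pQ_def by (subst lc_cong[where c'="\<lambda>l. (c * \<gamma> / (1 + c * \<gamma> * vinner d (lnk d x0 l) (lnk d x0 l))) *
        (vinner d (lnk d x0 l) x - b l)"]) auto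
  finally have pe: "prox d \<gamma> (Q d c J (lnk d x0) b) x = (\<lambda>i. x i - lc J (\<lambda>l. (c * \<gamma> / (1 + c * \<gamma> * vinner d (lnk d x0 l) (lnk d x0 l))) *
        (vinner d (lnk d x0 l) x - b l)) (lnk d x0) i)" .
  show "Pz d x0 (k + (if hard then 1 else 0)) (prox d \<gamma> (Q d c J (lnk d x0) b) x)"
    unfolding pe by (rule Pz_diff[OF Pz_mono[OF _ P] gen]) simp
qed

lemma Q_convex:
  assumes "c \<ge> 0"
  shows "convex_Rd d (Q d c J a b)"
  unfolding convex_Rd_def
proof (intro ballI allI impI)
  fix x y :: "nat \<Rightarrow> real" and \<theta> :: real assume th: "0 \<le> \<theta> \<and> \<theta> \<le> 1"
  have lin: "vinner d (a l) (vadd (vscale \<theta> x) (vscale (1-\<theta>) y)) - b l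
      = \<theta> * (vinner d (a l) x - b l) + (1-\<theta>) * (vinner d (a l) y - b l)" for l
    unfolding vadd_def vscale_def vinner_add_right[of d "a l" "\<lambda>k. \<theta> * x k" "\<lambda>k. (1-\<theta>) * y k"]
      vinner_scale_right by (simp add: algebra_simps)
  have sq: "(\<theta> * u + (1-\<theta>) * v)^2 \<le> \<theta> * u^2 + (1-\<theta>) * v^2" for u v :: real
  proof -
    have "\<theta> * u^2 + (1-\<theta>) * v^2 - (\<theta> * u + (1-\<theta>) * v)^2 = \<theta> * (1-\<theta>) * (u - v)^2"
      by (simp add: power2_eq_square algebra_simps)
    also have "\<dots> \<ge> 0" using th by simp
    finally show ?thesis by simp
  qed
  have "(\<Sum>l\<in>J. (vinner d (a l) (vadd (vscale \<theta> x) (vscale (1-\<theta>) y)) - b l)^2)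
     \<le> (\<Sum>l\<in>J. \<theta> * (vinner d (a l) x - b l)^2 + (1-\<theta>) * (vinner d (a l) y - b l)^2)"
    unfolding lin by (intro sum_mono sq)
  also have "\<dots> = \<theta> * (\<Sum>l\<in>J. (vinner d (a l) x - b l)^2) + (1-\<theta>) * (\<Sum>l\<in>J. (vinner d (a l) y - b l)^2)"
    by (simp add: sum.distrib sum_distrib_left)
  finally have "c/2 * (\<Sum>l\<in>J. (vinner d (a l) (vadd (vscale \<theta> x) (vscale (1-\<theta>) y)) - b l)^2)
      \<le> c/2 * (\<theta> * (\<Sum>l\<in>J. (vinner d (a l) x - b l)^2) + (1-\<theta>) * (\<Sum>l\<in>J. (vinner d (a l) y - b l)^2))"
    using assms by (intro mult_left_mono) auto
  moreover have "\<theta> * Q d c J a b x + (1-\<theta>) * Q d c J a b y = c/2 * (\<theta> * (\<Sum>l\<in>J. (vinner d (a l) x - b l)^2) + (1-\<theta>) * (\<Sum>l\<in>J. (vinner d (a l) y - b l)^2))"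
    unfolding Q_def by (simp add: field_simps)
  ultimately show "Q d c J a b (vadd (vscale \<theta> x) (vscale (1-\<theta>) y)) \<le> \<theta> * Q d c J a b x + (1-\<theta>) * Q d c J a b y"
    unfolding Q_def[of d c J a b "vadd (vscale \<theta> x) (vscale (1-\<theta>) y)"] by simp
qed

lemma favg_convex:
  assumes "\<And>i. i < n \<Longrightarrow> convex_Rd d (fs i)"
  shows "convex_Rd d (favg n fs)"
  unfolding convex_Rd_def
proof (intro ballI allI impI)
  fix x y :: "nat \<Rightarrow> real" and \<theta> :: real assume xy: "x \<in> Rd d" "y \<in> Rd d" and th: "0 \<le> \<theta> \<and> \<theta> \<le> 1"
  have "(\<Sum>i<n. fs i (vadd (vscale \<theta> x) (vscale (1-\<theta>) y))) \<le> (\<Sum>i<n. \<theta> * fs i x + (1-\<theta>) * fs i y)"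
    using assms xy th by (intro sum_mono) (auto simp: convex_Rd_def)
  also have "\<dots> = \<theta> * (\<Sum>i<n. fs i x) + (1-\<theta>) * (\<Sum>i<n. fs i y)"
    by (simp add: sum.distrib sum_distrib_left)
  finally show "favg n fs (vadd (vscale \<theta> x) (vscale (1-\<theta>) y)) \<le> \<theta> * favg n fs x + (1-\<theta>) * favg n fs y"
    unfolding favg_def by (simp add: divide_right_mono add_divide_distrib[symmetric])
qed



lemma lnk_self: "x0 \<in> Rd d \<Longrightarrow> vinner d (lnk d x0 l) (lnk d x0 l) \<le> 2"
  unfolding lnk_def vinner_diff_left vinner_diff_right by (simp add: W_orth)

lemma lnk_orth: "x0 \<in> Rd d \<Longrightarrow> l \<noteq> l' \<Longrightarrow> Suc l \<noteq> l' \<Longrightarrow> l \<noteq> Suc l' \<Longrightarrow> vinner d (lnk d x0 l) (lnk d x0 l') = 0"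
  unfolding lnk_def vinner_diff_left vinner_diff_right by (simp add: W_orth)

lemma grad_diff_sq:
  assumes x0: "x0 \<in> Rd d" and J: "finite J" and c: "c \<ge> 0" and o: "orth d J (lnk d x0)"
  shows "(vnorm d (vsub (grad d (Q d c J (lnk d x0) b) x) (grad d (Q d c J (lnk d x0) b) y)))^2
     = (\<Sum>l\<in>J. c^2 * (vinner d (lnk d x0 l) (vsub x y))^2 * vinner d (lnk d x0 l) (lnk d x0 l))"
proof -
  have aR: "\<forall>l\<in>J. lnk d x0 l \<in> Rd d" using lnk_Rd[OF x0] by auto
  have gx: "grad d (Q d c J (lnk d x0) b) x = gQ d c J (lnk d x0) b x" using J aR c by (rule grad_Q)
  have gy: "grad d (Q d c J (lnk d x0) b) y = gQ d c J (lnk d x0) b y" using J aR c by (rule grad_Q)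
  have vs: "vinner d (lnk d x0 l) (vsub x y) = vinner d (lnk d x0 l) x - vinner d (lnk d x0 l) y" for l
    by (simp add: vsub_def vinner_diff_right)
  have e: "vsub (gQ d c J (lnk d x0) b x) (gQ d c J (lnk d x0) b y) = lc J (\<lambda>l. c * vinner d (lnk d x0 l) (vsub x y)) (lnk d x0)"
    unfolding gQ_def lc_def vsub_def
    by (auto simp: vs[unfolded vsub_def] algebra_simps sum_subtractf[symmetric] intro!: ext sum.cong)
  show ?thesis unfolding gx gy e vnorm_sq vinner_lc_lc_orth[OF o J]
    by (intro sum.cong) (auto simp: power2_eq_square)
qed

definition JJc :: "nat \<Rightarrow> nat \<Rightarrow> nat \<Rightarrow> nat \<Rightarrow> nat set" where
  "JJc m iA iB i = (if i = iA then {l. l < m \<and> even l} else if i = iB then {l. l < m \<and> odd l} else {})"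

definition bc :: "real \<Rightarrow> nat \<Rightarrow> real" where "bc s l = (if l = 0 then s else 0)"

lemma JJc_finite: "finite (JJc m iA iB i)" by (simp add: JJc_def)

lemma JJc_orth: "x0 \<in> Rd d \<Longrightarrow> orth d (JJc m iA iB i) (lnk d x0)"
  unfolding orth_def JJc_def
  by (auto intro!: lnk_orth)

lemma fin_lt: "finite {l::nat. l < m \<and> P l}"
  by (rule finite_subset[of _ "{..<m}"]) auto

lemma sum_two:
  fixes n :: nat
  assumes "iA \<noteq> iB" "iA < n" "iB < n" "\<And>i. i < n \<Longrightarrow> i \<noteq> iA \<Longrightarrow> i \<noteq> iB \<Longrightarrow> f i = 0"
  shows "(\<Sum>i<n. f i) = f iA + f iB"
proof -
  have "(\<Sum>i<n. f i) = (\<Sum>i\<in>{iA, iB}. f i)"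
    using assms by (intro sum.mono_neutral_right) auto
  then show ?thesis using assms by simp
qed

lemma JJc_union: "iA \<noteq> iB \<Longrightarrow> {l. l < m \<and> even l} \<union> {l. l < m \<and> odd l} = {..<m}"
  by auto

lemma sum_even_odd:
  fixes m :: nat shows "(\<Sum>l\<in>{l. l < m \<and> even l}. f l) + (\<Sum>l\<in>{l. l < m \<and> odd l}. f l) = (\<Sum>l<m. f l)"
proof -
  have "(\<Sum>l<m. f l) = (\<Sum>l\<in>{l. l < m \<and> even l} \<union> {l. l < m \<and> odd l}. f l)"
    by (intro sum.cong) auto
  also have "\<dots> = (\<Sum>l\<in>{l. l < m \<and> even l}. f l) + (\<Sum>l\<in>{l. l < m \<and> odd l}. f l)"
    by (intro sum.union_disjoint fin_lt) auto
  finally show ?thesis by simp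
qed



lemma instance_main:
  assumes alg: "pifo_algorithm n p \<gamma> x0 R"
    and fsd: "\<And>i. fs i = Q d (cc i) (JJ i) (lnk d (x0 d)) (bb i)"
    and ok: "\<And>i. comp_ok d (x0 d) (cc i) (JJ i) (bb i) (i \<in> H)"
    and gap: "\<And>k x. Pz d (x0 d) k x \<Longrightarrow> favg n fs x - Fs \<ge> G - G * real k / (M + 1)"
  shows "(\<forall>i<n. \<forall>x\<in>Rd d. \<exists>g. has_grad d (fs i) x g)"
    and "(\<forall>i<n. \<forall>t::nat\<ge>1. \<forall>x\<in>Rd d. \<exists>!u. is_prox d (\<gamma> t) (fs i) x u)"
    and "convex_Rd d (favg n fs)"
    and "\<And>t. pifo_expect n p \<gamma> x0 R d fs (favg n fs) t - Fs \<ge> G - G * (real t * (\<Sum>j<n. if j \<in> H then p j else 0)) / (M + 1)"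
proof -
  have x0R: "x0 d \<in> Rd d" and gpos: "\<And>t. 1 \<le> t \<Longrightarrow> \<gamma> t > 0" using alg by (auto simp: pifo_algorithm_def)
  have aR: "\<forall>l\<in>J. lnk d (x0 d) l \<in> Rd d" for J using lnk_Rd[OF x0R] by auto
  have okf: "finite (JJ i)" "cc i \<ge> 0" "orth d (JJ i) (lnk d (x0 d))" for i
    using ok[of i] by (auto simp: comp_ok_def)
  show "\<forall>i<n. \<forall>x\<in>Rd d. \<exists>g. has_grad d (fs i) x g"
    unfolding fsd using has_grad_Q[OF okf(1) aR okf(2)] by blast
  show "\<forall>i<n. \<forall>t::nat\<ge>1. \<forall>x\<in>Rd d. \<exists>!u. is_prox d (\<gamma> t) (fs i) x u"
  proof (intro allI impI ballI)
    fix i and t :: nat and x assume "i < n" "1 \<le> t" "x \<in> Rd d"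
    then show "\<exists>!u. is_prox d (\<gamma> t) (fs i) x u" unfolding fsd
      using prox_Q_eq(2)[OF okf(1) aR okf(2) gpos okf(3)] by blast
  qed
  show "convex_Rd d (favg n fs)"
    by (rule favg_convex) (simp add: fsd Q_convex okf(2))
  have st: "step_ok d (x0 d) fs H \<gamma>"
    unfolding step_ok_def fsd
    using comp_step[OF x0R ok _ gpos] by blast
  fix t
  show "pifo_expect n p \<gamma> x0 R d fs (favg n fs) t - Fs \<ge> G - G * (real t * (\<Sum>j<n. if j \<in> H then p j else 0)) / (M + 1)"
    by (rule expect_bound[OF alg]) (rule gap[OF iter_Pz[OF alg st]])
qed

lemma gap_helper:
  fixes v G :: real and M k :: nat
  assumes "k \<le> M \<Longrightarrow> v \<ge> G" "v \<ge> 0" "G \<ge> 0"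
  shows "v \<ge> G - G * real k / (real M + 1)"
proof (cases "k \<le> M")
  case True
  have "G * real k / (real M + 1) \<ge> 0" using assms(3) by simp
  then show ?thesis using assms(1) True by linarith
next
  case False
  then have "real k \<ge> real M + 1" by simp
  then have "G * real k / (real M + 1) \<ge> G * (real M + 1) / (real M + 1)" using assms(3)
    by (intro divide_right_mono mult_left_mono) auto
  also have "G * (real M + 1) / (real M + 1) = G" by (simp add: add.commute)
  finally show ?thesis using assms(2) by linarith
qed



lemma shift1: "(\<Sum>j\<in>{1..m}. f j) = (\<Sum>l<m. f (Suc l))"
  by (rule sum.reindex_bij_witness[of _ Suc "\<lambda>j. j - 1"]) auto

lemma chain_favg:
  fixes n :: nat
  assumes iA: "iA \<noteq> iB" "iA < n" "iB < n"
  shows "favg n (\<lambda>i. Q d (real n * lam) (JJc m iA iB i) a (bc s)) x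
     = lam / 2 * (\<Sum>l<m. (vinner d (a l) x - bc s l)^2)"
proof -
  have n0: "real n > 0" using iA by simp
  have "(\<Sum>i<n. Q d (real n * lam) (JJc m iA iB i) a (bc s) x)
     = Q d (real n * lam) (JJc m iA iB iA) a (bc s) x + Q d (real n * lam) (JJc m iA iB iB) a (bc s) x"
    using iA by (intro sum_two) (auto simp: Q_def JJc_def)
  also have "\<dots> = real n * lam / 2 * (\<Sum>l<m. (vinner d (a l) x - bc s l)^2)"
    using iA(1) unfolding Q_def JJc_def
    by (simp add: sum_even_odd[where m=m and f="\<lambda>l. (vinner d (a l) x - bc s l)^2", symmetric] distrib_left)
  finally show ?thesis unfolding favg_def using n0 by simp
qed

lemma chain_link:
  assumes "l < m"
  shows "vinner d (lnk d x0 l) x - bc s l = (\<lambda>j. if j = 0 then s else vinner d (W d x0 j) x) (Suc l)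
      - (\<lambda>j. if j = 0 then s else vinner d (W d x0 j) x) l"
  by (simp add: lnk_x bc_def)

lemma chain_gap:
  assumes P: "Pz d x0 k x" and km: "k < m" and md: "m < d" and lam: "lam \<ge> 0"
  shows "lam / 2 * (\<Sum>l<m. (vinner d (lnk d x0 l) x - bc s l)^2) \<ge> lam * s^2 / (2 * m)"
proof -
  define V where "V j = (if j = 0 then s else vinner d (W d x0 j) x)" for j
  define f where "f l = vinner d (lnk d x0 l) x - bc s l" for l
  have fV: "f l = V (Suc l) - V l" if "l < m" for l using chain_link[OF that] by (simp add: f_def V_def)
  have "(\<Sum>l<Suc k. f l) = (\<Sum>l<Suc k. V (Suc l) - V l)" using km fV by (intro sum.cong) auto
  also have "\<dots> = V (Suc k) - V 0" by (rule sum_lessThan_telescope)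
  also have "V (Suc k) = 0" using P by (simp add: V_def Pz_def)
  finally have tel: "(\<Sum>l<Suc k. f l) = - s" by (simp add: V_def)
  have "s^2 \<le> (\<Sum>l<Suc k. (f l)^2) * real (Suc k)"
    using sum_squared_le_sum_of_squares[of f "{..<Suc k}"] tel by simp
  also have "(\<Sum>l<Suc k. (f l)^2) \<le> (\<Sum>l<m. (f l)^2)" using km by (intro sum_mono2) auto
  then have "(\<Sum>l<Suc k. (f l)^2) * real (Suc k) \<le> (\<Sum>l<m. (f l)^2) * real m"
    using km by (intro mult_mono) (auto intro: sum_nonneg)
  finally have A: "s^2 \<le> (\<Sum>l<m. (f l)^2) * real m" .
  have m0: "real m > 0" using km by simp
  have "lam * s^2 / (2 * m) \<le> lam * ((\<Sum>l<m. (f l)^2) * real m) / (2 * m)"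
    using A lam m0 by (intro divide_right_mono mult_left_mono) auto
  also have "\<dots> = lam / 2 * (\<Sum>l<m. (f l)^2)" using m0 by simp
  finally show ?thesis by (simp add: f_def)
qed

lemma chain_xstar:
  fixes s :: real
  assumes x0: "x0 \<in> Rd d" and md: "m < d"
  defines "xs \<equiv> (\<lambda>k. x0 k + s * lc {1..m} (\<lambda>_. 1) (W d x0) k)"
  shows "xs \<in> Rd d"
    and "\<And>l. l < m \<Longrightarrow> vinner d (lnk d x0 l) xs - bc s l = 0"
    and "(vnorm d (vsub x0 xs))^2 = s^2 * real m"
proof -
  have WR: "\<forall>j\<in>{1..m}. W d x0 j \<in> Rd d" using W_Rd[OF x0] by auto
  show "xs \<in> Rd d" using x0 lc_Rd[of "{1..m}" "W d x0" d "\<lambda>_. 1"] WR unfolding xs_def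
    by (auto simp: Rd_def)
  have o: "orth d {1..m} (W d x0)" using x0 by (auto simp: orth_def W_orth)
  have Wxs: "vinner d (W d x0 j) xs = (if 1 \<le> j \<and> j \<le> m then s else 0)" for j
  proof -
    have "vinner d (W d x0 j) xs = vinner d (W d x0 j) x0 + s * (\<Sum>j'\<in>{1..m}. vinner d (W d x0 j) (W d x0 j'))"
      unfolding xs_def vinner_add_right vinner_scale_right vinner_lc_right by simp
    also have "(\<Sum>j'\<in>{1..m}. vinner d (W d x0 j) (W d x0 j')) = (\<Sum>j'\<in>{1..m}. if j' = j \<and> 1 \<le> j \<and> j < d then 1 else 0)"
      using x0 by (intro sum.cong) (auto simp: W_orth)
    also have "\<dots> = (\<Sum>j'\<in>{1..m}. if j' = j then (if 1 \<le> j \<and> j < d then 1 else 0) else 0)"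
      by (intro sum.cong) auto
    also have "\<dots> = (if 1 \<le> j \<and> j \<le> m then 1 else 0)" using md by (subst sum.delta) auto
    finally show ?thesis using W_x0[OF x0] by simp
  qed
  show "vinner d (lnk d x0 l) xs - bc s l = 0" if "l < m" for l
    using chain_link[OF that, of d x0 xs s] that by (simp add: Wxs)
  have eq: "vsub x0 xs = (\<lambda>k. (- s) * lc {1..m} (\<lambda>_. 1) (W d x0) k)" unfolding vsub_def xs_def by auto
  have "vinner d (vsub x0 xs) (vsub x0 xs) = (- s) * ((- s) * vinner d (lc {1..m} (\<lambda>_. 1) (W d x0)) (lc {1..m} (\<lambda>_. 1) (W d x0)))"
    by (simp only: eq vinner_scale_left vinner_scale_right)
  then have "(vnorm d (vsub x0 xs))^2 = s^2 * vinner d (lc {1..m} (\<lambda>_. 1) (W d x0)) (lc {1..m} (\<lambda>_. 1) (W d x0))"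
    unfolding vnorm_sq by (simp add: power2_eq_square)
  also have "vinner d (lc {1..m} (\<lambda>_. 1) (W d x0)) (lc {1..m} (\<lambda>_. 1) (W d x0)) = real m"
    unfolding vinner_lc_lc_orth[OF o finite_atLeastAtMost] using x0 md by (simp add: W_orth)
  finally show "(vnorm d (vsub x0 xs))^2 = s^2 * real m" .
qed



lemma sq_diff_le: "((a::real) - b)^2 \<le> 2 * a^2 + 2 * b^2"
proof -
  have "2 * a^2 + 2 * b^2 - (a - b)^2 = (a + b)^2" by (simp add: power2_eq_square algebra_simps)
  then show ?thesis using zero_le_power2[of "a + b"] by linarith
qed

lemma links_bound:
  assumes x0: "x0 \<in> Rd d" and d: "d = Suc m"
  shows "(\<Sum>l<m. (vinner d (lnk d x0 l) z)^2) \<le> 4 * vinner d z z"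
proof -
  define f where "f j = (vinner d (W d x0 j) z)^2" for j
  have f0: "f j \<ge> 0" for j by (simp add: f_def)
  have B0: "(\<Sum>j\<in>{1..m}. f j) \<le> vinner d z z"
  proof -
    have sub: "{1..m} \<subseteq> {1..<d}" using d by auto
    show ?thesis using bessel[OF x0 finite_atLeastAtMost sub, of z] unfolding f_def .
  qed
  have B1: "(\<Sum>l<m. f (Suc l)) \<le> vinner d z z"
    using B0 shift1[of f m] by simp
  have B2: "(\<Sum>l<m. f l) \<le> (\<Sum>l<m. f (Suc l))"
  proof -
    have "(\<Sum>l<m. f l) \<le> (\<Sum>l<Suc m. f l)" using f0 by (intro sum_mono2) auto
    also have "\<dots> = f 0 + (\<Sum>l<m. f (Suc l))" by (rule sum.lessThan_Suc_shift)
    also have "f 0 = 0" by (simp add: f_def)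
    finally show ?thesis by simp
  qed
  have "(\<Sum>l<m. (vinner d (lnk d x0 l) z)^2) \<le> (\<Sum>l<m. 2 * f (Suc l) + 2 * f l)"
  proof (intro sum_mono)
    fix l
    have "(vinner d (lnk d x0 l) z)^2 = (vinner d (W d x0 (Suc l)) z - vinner d (W d x0 l) z)^2"
      by (simp add: lnk_x)
    also have "\<dots> \<le> 2 * f (Suc l) + 2 * f l" unfolding f_def by (rule sq_diff_le)
    finally show "(vinner d (lnk d x0 l) z)^2 \<le> 2 * f (Suc l) + 2 * f l" .
  qed
  also have "\<dots> = 2 * (\<Sum>l<m. f (Suc l)) + 2 * (\<Sum>l<m. f l)" by (simp add: sum.distrib sum_distrib_left)
  also have "\<dots> \<le> 4 * vinner d z z" using B1 B2 by linarith
  finally show ?thesis .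
qed

lemma chain_smooth:
  fixes n :: nat
  assumes x0: "x0 \<in> Rd d" and d: "d = Suc m" and iA: "iA \<noteq> iB" "iA < n" "iB < n"
    and lam: "lam \<ge> 0" and Lb: "8 * real n * lam^2 \<le> L^2"
  shows "avg_smooth d n L (\<lambda>i. Q d (real n * lam) (JJc m iA iB i) (lnk d x0) (bc s))"
  unfolding avg_smooth_def
proof (intro ballI)
  fix x y assume "x \<in> Rd d" "y \<in> Rd d"
  define c where "c = real n * lam"
  define z where "z = vsub x y"
  have c0: "c \<ge> 0" using lam by (simp add: c_def)
  define T where "T i = (vnorm d (vsub (grad d (Q d c (JJc m iA iB i) (lnk d x0) (bc s)) x) (grad d (Q d c (JJc m iA iB i) (lnk d x0) (bc s)) y)))^2" for i
  have Tf: "T i = (\<Sum>l\<in>JJc m iA iB i. c^2 * (vinner d (lnk d x0 l) z)^2 * vinner d (lnk d x0 l) (lnk d x0 l))" for i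
    unfolding T_def z_def by (rule grad_diff_sq[OF x0 JJc_finite c0 JJc_orth[OF x0]])
  have Tle: "T i \<le> (\<Sum>l\<in>JJc m iA iB i. 2 * c^2 * (vinner d (lnk d x0 l) z)^2)" for i
    unfolding Tf
  proof (intro sum_mono)
    fix l
    have "c^2 * (vinner d (lnk d x0 l) z)^2 * vinner d (lnk d x0 l) (lnk d x0 l) \<le> c^2 * (vinner d (lnk d x0 l) z)^2 * 2"
      using lnk_self[OF x0, of l] by (intro mult_left_mono) auto
    then show "c^2 * (vinner d (lnk d x0 l) z)^2 * vinner d (lnk d x0 l) (lnk d x0 l) \<le> 2 * c^2 * (vinner d (lnk d x0 l) z)^2"
      by (simp add: algebra_simps)
  qed
  have "(\<Sum>i<n. T i) = T iA + T iB"
    using iA by (intro sum_two) (auto simp: Tf JJc_def)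
  also have "\<dots> \<le> (\<Sum>l\<in>{l. l < m \<and> even l}. 2 * c^2 * (vinner d (lnk d x0 l) z)^2) + (\<Sum>l\<in>{l. l < m \<and> odd l}. 2 * c^2 * (vinner d (lnk d x0 l) z)^2)"
    using Tle[of iA] Tle[of iB] iA(1) by (simp add: JJc_def)
  also have "\<dots> = 2 * c^2 * (\<Sum>l<m. (vinner d (lnk d x0 l) z)^2)"
    by (simp add: sum_even_odd sum_distrib_left)
  also have "\<dots> \<le> 2 * c^2 * (4 * vinner d z z)"
    by (intro mult_left_mono links_bound[OF x0 d]) auto
  finally have S: "(\<Sum>i<n. T i) \<le> 8 * c^2 * vinner d z z" by simp
  have n0: "real n > 0" using iA by simp
  have "(\<Sum>i<n. T i) / real n \<le> 8 * c^2 * vinner d z z / real n"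
    using S n0 by (intro divide_right_mono) auto
  also have "8 * c^2 * vinner d z z / real n = (8 * real n * lam^2) * vinner d z z"
    using n0 by (simp add: c_def power2_eq_square)
  also have "\<dots> \<le> L^2 * vinner d z z" using Lb vinner_self_nonneg by (intro mult_right_mono) auto
  finally show "(\<Sum>i<n. (vnorm d (vsub (grad d (Q d (real n * lam) (JJc m iA iB i) (lnk d x0) (bc s)) x) (grad d (Q d (real n * lam) (JJc m iA iB i) (lnk d x0) (bc s)) y)))^2) / real n
      \<le> L^2 * (vnorm d (vsub x y))^2"
    unfolding T_def c_def z_def vnorm_sq[of d "vsub x y"] .
qed



lemma chain_full:
  fixes n m :: nat
  assumes alg: "pifo_algorithm n p \<gamma> x0 R" and iA: "iA \<noteq> iB" "iA < n" "iB < n"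
    and m: "m \<ge> 1" and d: "d = Suc m" and lam: "lam \<ge> 0" and s: "s \<ge> 0"
    and Lb: "8 * real n * lam^2 \<le> L^2"
  shows "\<exists>fs xstar.
         (\<forall>i<n. \<forall>x\<in>Rd d. \<exists>g. has_grad d (fs i) x g) \<and>
         (\<forall>i<n. \<forall>t::nat\<ge>1. \<forall>x\<in>Rd d. \<exists>!u. is_prox d (\<gamma> t) (fs i) x u) \<and>
         avg_smooth d n L fs \<and>
         convex_Rd d (favg n fs) \<and>
         xstar \<in> Rd d \<and> (\<forall>y\<in>Rd d. favg n fs xstar \<le> favg n fs y) \<and>
         (vnorm d (vsub (x0 d) xstar))^2 = s^2 * real m \<and>
         (\<forall>t::nat. pifo_expect n p \<gamma> x0 R d fs (favg n fs) t - favg n fs xstar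
             \<ge> lam * s^2 / (2 * m) - lam * s^2 / (2 * m) * (real t * (p iA + p iB)) / m)"
proof -
  have x0R: "x0 d \<in> Rd d" using alg by (simp add: pifo_algorithm_def)
  define fs where "fs = (\<lambda>i. Q d (real n * lam) (JJc m iA iB i) (lnk d (x0 d)) (bc s))"
  define xs where "xs = (\<lambda>k. x0 d k + s * lc {1..m} (\<lambda>_. 1) (W d (x0 d)) k)"
  define G where "G = lam * s^2 / (2 * m)"
  have md: "m < d" using d by simp
  have fav: "favg n fs x = lam / 2 * (\<Sum>l<m. (vinner d (lnk d (x0 d) l) x - bc s l)^2)" for x
    unfolding fs_def using iA by (rule chain_favg)
  have fav0: "favg n fs x \<ge> 0" for x unfolding fav using lam by (intro mult_nonneg_nonneg sum_nonneg) auto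
  have xsR: "xs \<in> Rd d" unfolding xs_def by (rule chain_xstar(1)[OF x0R md])
  have fxs: "favg n fs xs = 0" unfolding fav
    using chain_xstar(2)[OF x0R md, of _ s, folded xs_def] by simp
  have nrm: "(vnorm d (vsub (x0 d) xs))^2 = s^2 * real m" unfolding xs_def by (rule chain_xstar(3)[OF x0R md])
  have ok: "comp_ok d (x0 d) (real n * lam) (JJc m iA iB i) (bc s) (i \<in> {iA, iB})" for i
    using JJc_orth[OF x0R] lam by (auto simp: comp_ok_def JJc_finite bc_def JJc_def)
  have fsd: "\<And>i. fs i = Q d (real n * lam) (JJc m iA iB i) (lnk d (x0 d)) (bc s)" by (simp add: fs_def)
  have gap: "favg n fs x - 0 \<ge> G - G * real k / (real (m - 1) + 1)" if P: "Pz d (x0 d) k x" for k x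
  proof (rule gap_helper)
    assume "k \<le> m - 1"
    then have "k < m" using m by simp
    then show "favg n fs x - 0 \<ge> G" unfolding fav G_def using chain_gap[OF P _ md lam] by simp
  next
    show "favg n fs x - 0 \<ge> 0" using fav0 by simp
    show "G \<ge> 0" using lam s by (simp add: G_def)
  qed
  note main = instance_main[where fs=fs and cc="\<lambda>_. real n * lam" and JJ="JJc m iA iB" and bb="\<lambda>_. bc s"
     and H="{iA, iB}" and Fs=0 and G=G and M="m - 1", OF alg fsd ok gap]
  have q: "(\<Sum>j<n. if j \<in> {iA, iB} then p j else 0) = p iA + p iB"
    using iA by (subst sum_two[OF iA]) auto
  have mm: "real (m - 1) + 1 = real m" using m by simp
  show ?thesis
  proof (intro exI[of _ fs] exI[of _ xs] conjI)
    show "\<forall>i<n. \<forall>x\<in>Rd d. \<exists>g. has_grad d (fs i) x g" using main(1) fs_def by simp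
    show "\<forall>i<n. \<forall>t::nat\<ge>1. \<forall>x\<in>Rd d. \<exists>!u. is_prox d (\<gamma> t) (fs i) x u" using main(2) fs_def by simp
    show "avg_smooth d n L fs" unfolding fs_def by (rule chain_smooth[OF x0R d iA lam Lb])
    show "convex_Rd d (favg n fs)" using main(3) fs_def by simp
    show "xs \<in> Rd d" by (rule xsR)
    show "\<forall>y\<in>Rd d. favg n fs xs \<le> favg n fs y" using fxs fav0 by simp
    show "(vnorm d (vsub (x0 d) xs))^2 = s^2 * real m" by (rule nrm)
    show "\<forall>t::nat. pifo_expect n p \<gamma> x0 R d fs (favg n fs) t - favg n fs xs
             \<ge> lam * s^2 / (2 * m) - lam * s^2 / (2 * m) * (real t * (p iA + p iB)) / m"
      using main(4) fs_def fxs q mm by (simp add: G_def)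
  qed
qed



lemma lnk0: "lnk d x0 0 = W d x0 1" unfolding lnk_def by simp

lemma simple_full:
  fixes n :: nat
  assumes alg: "pifo_algorithm n p \<gamma> x0 R" and ist: "istar < n" and L: "L \<ge> 0"
  shows "\<exists>fs xstar.
         (\<forall>i<n. \<forall>x\<in>Rd 2. \<exists>g. has_grad 2 (fs i) x g) \<and>
         (\<forall>i<n. \<forall>t::nat\<ge>1. \<forall>x\<in>Rd 2. \<exists>!u. is_prox 2 (\<gamma> t) (fs i) x u) \<and>
         avg_smooth 2 n L fs \<and>
         convex_Rd 2 (favg n fs) \<and>
         xstar \<in> Rd 2 \<and> (\<forall>y\<in>Rd 2. favg n fs xstar \<le> favg n fs y) \<and>
         (vnorm 2 (vsub (x0 2) xstar))^2 = B^2 \<and>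
         (\<forall>t::nat. pifo_expect n p \<gamma> x0 R 2 fs (favg n fs) t - favg n fs xstar
             \<ge> L * B^2 / 2 - L * B^2 / 2 * (real t * p istar) / 1)"
proof -
  define d :: nat where "d = 2"
  have x0R: "x0 d \<in> Rd d" using alg by (simp add: pifo_algorithm_def)
  define w where "w = W d (x0 d) 1"
  have ww: "vinner d w w = 1" unfolding w_def using x0R by (simp add: W_orth d_def)
  have wx0: "vinner d w (x0 d) = 0" unfolding w_def by (rule W_x0[OF x0R])
  have wR: "w \<in> Rd d" unfolding w_def by (rule W_Rd[OF x0R])
  define bb where "bb i = (\<lambda>l::nat. if i = istar then real n * B else 0)" for i
  define fs where "fs = (\<lambda>i. Q d L {0} (lnk d (x0 d)) (bb i))"
  define xs where "xs = (\<lambda>k. x0 d k + B * w k)"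
  define Fs where "Fs = L / 2 * (real n - 1) * B^2"
  have n0: "real n > 0" using ist by simp
  have fav: "favg n fs x = L / 2 * (vinner d w x - B)^2 + Fs" for x
  proof -
    define u where "u = vinner d w x"
    have fi: "fs i x = L / 2 * (u - bb i 0)^2" for i
      unfolding fs_def Q_def u_def w_def by (simp add: lnk0)
    have "(\<Sum>i<n. fs i x) = fs istar x + (\<Sum>i\<in>{..<n}-{istar}. fs i x)"
      using ist by (simp add: sum.remove)
    also have "(\<Sum>i\<in>{..<n}-{istar}. fs i x) = (\<Sum>i\<in>{..<n}-{istar}. L / 2 * u^2)"
      by (intro sum.cong) (auto simp: fi bb_def)
    also have "\<dots> = (real n - 1) * (L / 2 * u^2)" using ist by (simp add: of_nat_diff)
    finally have "(\<Sum>i<n. fs i x) = L / 2 * (u - real n * B)^2 + (real n - 1) * (L / 2 * u^2)"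
      by (simp add: fi bb_def)
    also have "\<dots> = real n * (L / 2 * (u - B)^2 + Fs)"
      unfolding Fs_def by (simp add: power2_eq_square field_simps)
    finally show ?thesis unfolding favg_def u_def using n0 by simp
  qed
  have xsR: "xs \<in> Rd d" using x0R wR by (auto simp: Rd_def xs_def)
  have wxs: "vinner d w xs = B" unfolding xs_def
    using vinner_add_right[of d w "x0 d" "\<lambda>k. B * w k"] vinner_scale_right[of d w B w] wx0 ww by simp
  have fxs: "favg n fs xs = Fs" unfolding fav wxs by simp
  have nrm: "(vnorm d (vsub (x0 d) xs))^2 = B^2"
  proof -
    have "vsub (x0 d) xs = (\<lambda>k. (- B) * w k)" unfolding vsub_def xs_def by auto
    then have "vinner d (vsub (x0 d) xs) (vsub (x0 d) xs) = (- B) * ((- B) * vinner d w w)"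
      by (simp only: vinner_scale_left vinner_scale_right)
    then show ?thesis unfolding vnorm_sq using ww by (simp add: power2_eq_square)
  qed
  have ok: "comp_ok d (x0 d) L {0} (bb i) (i \<in> {istar})" for i
    using L by (auto simp: comp_ok_def orth_def bb_def)
  have fsd: "\<And>i. fs i = Q d L {0} (lnk d (x0 d)) (bb i)" by (simp add: fs_def)
  have gap0: "favg n fs x - Fs \<ge> L * B^2 / 2 - L * B^2 / 2 * real k / (real (0::nat) + 1)"
    if P: "Pz d (x0 d) k x" for k x
  proof (rule gap_helper)
    assume "k \<le> 0"
    then have "vinner d w x = 0" using P unfolding w_def Pz_def
      by (simp add: vinner_comm[of d _ x])
    then show "favg n fs x - Fs \<ge> L * B^2 / 2" unfolding fav by (simp add: power2_eq_square)
  next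
    show "favg n fs x - Fs \<ge> 0" unfolding fav using L by simp
    show "L * B^2 / 2 \<ge> 0" using L by simp
  qed
  have gap: "favg n fs x - Fs \<ge> L * B^2 / 2 - L * B^2 / 2 * real k / ((0::real) + 1)"
    if P: "Pz d (x0 d) k x" for k x using gap0[OF P] by simp
  note main = instance_main[where fs=fs and cc="\<lambda>_. L" and JJ="\<lambda>_. {0}" and bb=bb
     and H="{istar}" and Fs=Fs and G="L * B^2 / 2" and M="0::real", OF alg fsd ok gap]
  have q: "(\<Sum>j<n. if j \<in> {istar} then p j else 0) = p istar"
    using ist by (simp add: sum.delta)
  have smooth: "avg_smooth d n L fs"
    unfolding avg_smooth_def
  proof (intro ballI)
    fix x y assume "x \<in> Rd d" "y \<in> Rd d"
    have o: "orth d {0} (lnk d (x0 d))" by (simp add: orth_def)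
    have T: "(vnorm d (vsub (grad d (fs i) x) (grad d (fs i) y)))^2 = L^2 * (vinner d w (vsub x y))^2" for i
      unfolding fs_def using grad_diff_sq[OF x0R _ L o, of "bb i" x y] ww by (simp add: lnk0 w_def)
    have "(\<Sum>i<n. (vnorm d (vsub (grad d (fs i) x) (grad d (fs i) y)))^2) / real n = L^2 * (vinner d w (vsub x y))^2"
      unfolding T using n0 by simp
    also have "\<dots> \<le> L^2 * (vinner d w w * vinner d (vsub x y) (vsub x y))"
      by (intro mult_left_mono vinner_cs) auto
    finally show "(\<Sum>i<n. (vnorm d (vsub (grad d (fs i) x) (grad d (fs i) y)))^2) / real n \<le> L^2 * (vnorm d (vsub x y))^2"
      using ww by (simp add: vnorm_sq)
  qed
  have "\<exists>fs xstar.
         (\<forall>i<n. \<forall>x\<in>Rd d. \<exists>g. has_grad d (fs i) x g) \<and>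
         (\<forall>i<n. \<forall>t::nat\<ge>1. \<forall>x\<in>Rd d. \<exists>!u. is_prox d (\<gamma> t) (fs i) x u) \<and>
         avg_smooth d n L fs \<and>
         convex_Rd d (favg n fs) \<and>
         xstar \<in> Rd d \<and> (\<forall>y\<in>Rd d. favg n fs xstar \<le> favg n fs y) \<and>
         (vnorm d (vsub (x0 d) xstar))^2 = B^2 \<and>
         (\<forall>t::nat. pifo_expect n p \<gamma> x0 R d fs (favg n fs) t - favg n fs xstar
             \<ge> L * B^2 / 2 - L * B^2 / 2 * (real t * p istar) / 1)"
  proof (intro exI[of _ fs] exI[of _ xs] conjI)
    show "\<forall>i<n. \<forall>x\<in>Rd d. \<exists>g. has_grad d (fs i) x g" using main(1) .
    show "\<forall>i<n. \<forall>t::nat\<ge>1. \<forall>x\<in>Rd d. \<exists>!u. is_prox d (\<gamma> t) (fs i) x u" using main(2) .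
    show "avg_smooth d n L fs" by (rule smooth)
    show "convex_Rd d (favg n fs)" using main(3) .
    show "xs \<in> Rd d" by (rule xsR)
    show "\<forall>y\<in>Rd d. favg n fs xs \<le> favg n fs y" unfolding fav wxs using L by simp
    show "(vnorm d (vsub (x0 d) xs))^2 = B^2" by (rule nrm)
    show "\<forall>t::nat. pifo_expect n p \<gamma> x0 R d fs (favg n fs) t - favg n fs xs
             \<ge> L * B^2 / 2 - L * B^2 / 2 * (real t * p istar) / 1"
      using main(4) fxs q by simp
  qed
  then show ?thesis unfolding d_def .
qed



lemma exists_small:
  fixes p :: "nat \<Rightarrow> real"
  assumes "finite S" "S \<noteq> {}" "sum p S \<le> 1"
  shows "\<exists>i\<in>S. p i \<le> 1 / real (card S)"
proof (rule ccontr)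
  assume "\<not> ?thesis"
  then have "\<And>i. i \<in> S \<Longrightarrow> 1 / real (card S) < p i" by auto
  then have "(\<Sum>i\<in>S. 1 / real (card S)) < sum p S" using assms by (intro sum_strict_mono) auto
  moreover have "(\<Sum>i\<in>S. 1 / real (card S)) = 1" using assms by simp
  ultimately show False using assms by simp
qed

lemma pick_one:
  fixes p :: "nat \<Rightarrow> real"
  assumes "n \<ge> 1" "(\<Sum>j<n. p j) = 1"
  shows "\<exists>i<n. p i \<le> 1 / real n"
proof -
  have "{..<n} \<noteq> {}" using assms by auto
  then obtain i where "i \<in> {..<n}" "p i \<le> 1 / real (card {..<n})"
    using exists_small[of "{..<n}" p] assms by auto
  then show ?thesis by auto
qed

lemma pick_two:
  fixes p :: "nat \<Rightarrow> real"
  assumes n: "n \<ge> 2" and p0: "\<And>j. p j \<ge> 0" and s: "(\<Sum>j<n. p j) = 1"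
  shows "\<exists>iA iB. iA \<noteq> iB \<and> iA < n \<and> iB < n \<and> p iA + p iB \<le> 3 / real n"
proof -
  obtain iA where A: "iA < n" "p iA \<le> 1 / real n" using pick_one[of n p] n s by auto
  have "sum p ({..<n} - {iA}) = 1 - p iA" using A s by (simp add: sum_diff1)
  then have "sum p ({..<n} - {iA}) \<le> 1" using p0[of iA] by simp
  moreover have "{..<n} - {iA} \<noteq> {}" using n A by (metis Diff_eq_empty_iff card_lessThan
      card_mono finite.emptyI finite_insert insert_absorb not_less_eq_eq numeral_2_eq_2 subset_insertI
      card.insert_remove card.empty Suc_le_mono insert_Diff_single)
  ultimately obtain iB where B: "iB \<in> {..<n} - {iA}" "p iB \<le> 1 / real (card ({..<n} - {iA}))"
    using exists_small[of "{..<n} - {iA}" p] by auto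
  have c: "card ({..<n} - {iA}) = n - 1" using A by simp
  have "1 / real (n - 1) \<le> 2 / real n" using n by (simp add: field_simps of_nat_diff)
  then have "p iB \<le> 2 / real n" using B c by simp
  then have "p iA + p iB \<le> 3 / real n" using A by simp
  moreover have "iA \<noteq> iB" "iB < n" using B by auto
  ultimately show ?thesis using A by blast
qed



lemma vnorm_le_from_sq:
  assumes "(vnorm d x)^2 = B^2" "B \<ge> 0" shows "vnorm d x \<le> B"
  using power2_eq_imp_eq[OF assms(1) vnorm_nonneg assms(2)] by simp

lemma main_case:
  fixes n :: nat and L B \<epsilon> :: real
  assumes n: "n \<ge> 2" and L: "L > 0" and B: "B > 0" and e: "\<epsilon> > 0" and eL: "\<epsilon> \<le> L * B^2 / 4"
    and alg: "pifo_algorithm n p \<gamma> x0 R"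
  shows "\<exists>(d::nat) (fs::nat \<Rightarrow> (nat \<Rightarrow> real) \<Rightarrow> real) xstar.
         real d \<le> 2 * (1 + B * real n powr (-1/4) * sqrt (L / \<epsilon>)) \<and>
         (\<forall>i<n. \<forall>x\<in>Rd d. \<exists>g. has_grad d (fs i) x g) \<and>
         (\<forall>i<n. \<forall>t\<ge>1. \<forall>x\<in>Rd d. \<exists>!u. is_prox d (\<gamma> t) (fs i) x u) \<and>
         avg_smooth d n L fs \<and>
         convex_Rd d (favg n fs) \<and>
         xstar \<in> Rd d \<and> (\<forall>y\<in>Rd d. favg n fs xstar \<le> favg n fs y) \<and>
         vnorm d (vsub (x0 d) xstar) \<le> B \<and>
         (\<forall>t::nat. real t \<le> 1/64 * (real n + B * real n powr (3/4) * sqrt (L / \<epsilon>)) \<longrightarrow>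
            pifo_expect n p \<gamma> x0 R d fs (favg n fs) t - favg n fs xstar \<ge> \<epsilon>)"
proof -
  have p0: "\<And>j. p j \<ge> 0" and ps: "(\<Sum>j<n. p j) = 1" using alg by (auto simp: pifo_algorithm_def)
  define r where "r = real n powr (-1/4)"
  define K where "K = B * r * sqrt (L / \<epsilon>)"
  have n0: "real n > 0" using n by simp
  have r0: "r > 0" using n0 by (simp add: r_def)
  have K0: "K > 0" using B r0 L e by (simp add: K_def)
  have F1: "B * real n powr (3/4) * sqrt (L / \<epsilon>) = real n * K"
  proof -
    have e1: "real n powr (1 + (-1/4)) = real n powr 1 * real n powr (-1/4)" by (rule powr_add)
    have e2: "real n powr 1 = real n" using n0 by simp
    have e3: "(1 + (-1/4)::real) = 3/4" by simp
    have "real n powr (3/4) = real n * r" using e1 e2 e3 r_def by metis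
    then show ?thesis by (simp add: K_def)
  qed
  have F2: "K^2 * sqrt (real n) * \<epsilon> = B^2 * L"
  proof -
    have rr: "r^2 * sqrt (real n) = 1"
    proof -
      have "r^2 = real n powr (-1/2)" using n0 by (simp add: r_def power2_eq_square powr_add[symmetric])
      moreover have "sqrt (real n) = real n powr (1/2)" using n0 by (simp add: powr_half_sqrt)
      ultimately show ?thesis using n0 by (simp add: powr_add[symmetric])
    qed
    have "K^2 * sqrt (real n) * \<epsilon> = B^2 * (r^2 * sqrt (real n)) * ((sqrt (L / \<epsilon>))^2 * \<epsilon>)"
      by (simp add: K_def power_mult_distrib)
    also have "(sqrt (L / \<epsilon>))^2 * \<epsilon> = L" using L e by simp
    finally show ?thesis using rr by simp
  qed
  have sn: "sqrt (real n) > 0" using n0 by simp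
  have Tb: "1/64 * (real n + B * real n powr (3/4) * sqrt (L / \<epsilon>)) = real n * (1 + K) / 64"
    unfolding F1 by (simp add: algebra_simps)
  show ?thesis
  proof (cases "K \<ge> 8")
    case True
    define m where "m = nat \<lfloor>K / 4\<rfloor>"
    have mK: "real m \<le> K / 4" "K / 4 - 1 < real m" using K0
      by (simp_all add: m_def) linarith+
    have m1: "m \<ge> 1" using mK True by simp
    have mpos: "real m > 0" using m1 by simp
    obtain iA iB where AB: "iA \<noteq> iB" "iA < n" "iB < n" "p iA + p iB \<le> 3 / real n"
      using pick_two[OF n p0 ps] by blast
    define lam where "lam = L / (3 * sqrt (real n))"
    define s where "s = B / sqrt (real m)"
    have lam0: "lam \<ge> 0" using L sn by (simp add: lam_def)
    have s0: "s \<ge> 0" using B by (simp add: s_def)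
    have Lb: "8 * real n * lam^2 \<le> L^2"
    proof -
      have "8 * real n * lam^2 = 8 / 9 * L^2" using n0 by (simp add: lam_def power_divide power_mult_distrib)
      then show ?thesis using zero_le_power2[of L] by linarith
    qed
    obtain fs xstar where FS:
         "(\<forall>i<n. \<forall>x\<in>Rd (Suc m). \<exists>g. has_grad (Suc m) (fs i) x g)"
         "(\<forall>i<n. \<forall>t::nat\<ge>1. \<forall>x\<in>Rd (Suc m). \<exists>!u. is_prox (Suc m) (\<gamma> t) (fs i) x u)"
         "avg_smooth (Suc m) n L fs"
         "convex_Rd (Suc m) (favg n fs)"
         "xstar \<in> Rd (Suc m)" "(\<forall>y\<in>Rd (Suc m). favg n fs xstar \<le> favg n fs y)"
         "(vnorm (Suc m) (vsub (x0 (Suc m)) xstar))^2 = s^2 * real m"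
         "(\<forall>t::nat. pifo_expect n p \<gamma> x0 R (Suc m) fs (favg n fs) t - favg n fs xstar
             \<ge> lam * s^2 / (2 * m) - lam * s^2 / (2 * m) * (real t * (p iA + p iB)) / m)"
      using chain_full[OF alg AB(1-3) m1 refl lam0 s0 Lb] by blast
    have nrm: "vnorm (Suc m) (vsub (x0 (Suc m)) xstar) \<le> B"
      using FS(7) mpos B by (intro vnorm_le_from_sq) (simp_all add: s_def power_divide)
    have dle: "real (Suc m) \<le> 2 * (1 + B * real n powr (-1/4) * sqrt (L / \<epsilon>))"
      using mK K0 unfolding K_def r_def by simp
    define G where "G = lam * s^2 / (2 * m)"
    have G2: "G \<ge> 2 * \<epsilon>"
    proof -
      have G: "G = L * B^2 / (6 * sqrt (real n) * (real m)^2)"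
        using mpos sn by (simp add: G_def lam_def s_def power_divide power2_eq_square)
      have "(real m)^2 \<le> (K/4)^2" using mK mpos by (intro power_mono) auto
      then have "12 * \<epsilon> * sqrt (real n) * (real m)^2 \<le> 12 * \<epsilon> * sqrt (real n) * (K/4)^2"
        using e sn by (intro mult_left_mono) auto
      also have "\<dots> = 3/4 * (K^2 * sqrt (real n) * \<epsilon>)" by (simp add: power_divide)
      also have "\<dots> = 3/4 * (B^2 * L)" using F2 by simp
      also have "\<dots> \<le> L * B^2" using L B by simp
      finally have A: "12 * \<epsilon> * sqrt (real n) * (real m)^2 \<le> L * B^2" .
      have pos: "6 * sqrt (real n) * (real m)^2 > 0" using sn mpos by simp
      show ?thesis unfolding G using A pos by (simp add: field_simps)
    qed
    have Gnn: "G \<ge> 0" using G2 e by simp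
    have exp: "pifo_expect n p \<gamma> x0 R (Suc m) fs (favg n fs) t - favg n fs xstar \<ge> \<epsilon>"
      if t: "real t \<le> 1/64 * (real n + B * real n powr (3/4) * sqrt (L / \<epsilon>))" for t :: nat
    proof -
      define a where "a = real t * (p iA + p iB)"
      have a0: "a \<ge> 0" using p0 by (simp add: a_def)
      have "a \<le> real n * (1 + K) / 64 * (3 / real n)"
        unfolding a_def using t Tb AB(4) p0 by (intro mult_mono) (auto intro: add_nonneg_nonneg)
      also have "\<dots> = 3 * (1 + K) / 64" using n0 by simp
      also have "\<dots> \<le> real m / 2" using mK True by simp
      finally have am: "a / real m \<le> 1/2" using mpos by (simp add: field_simps)
      have "G * (a / real m) \<le> G * (1/2)" using am Gnn by (intro mult_left_mono) auto
      then have "G - G * a / real m \<ge> \<epsilon>" using G2 by simp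
      moreover have "G - G * a / real m \<le> pifo_expect n p \<gamma> x0 R (Suc m) fs (favg n fs) t - favg n fs xstar"
        using FS(8)[rule_format, of t] unfolding G_def a_def by simp
      ultimately show ?thesis by linarith
    qed
    show ?thesis
      using dle FS(1-6) nrm exp by blast
  next
    case False
    obtain istar where I: "istar < n" "p istar \<le> 1 / real n" using pick_one[of n p] n ps by auto
    obtain fs xstar where FS:
         "(\<forall>i<n. \<forall>x\<in>Rd 2. \<exists>g. has_grad 2 (fs i) x g)"
         "(\<forall>i<n. \<forall>t::nat\<ge>1. \<forall>x\<in>Rd 2. \<exists>!u. is_prox 2 (\<gamma> t) (fs i) x u)"
         "avg_smooth 2 n L fs"
         "convex_Rd 2 (favg n fs)"
         "xstar \<in> Rd 2" "(\<forall>y\<in>Rd 2. favg n fs xstar \<le> favg n fs y)"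
         "(vnorm 2 (vsub (x0 2) xstar))^2 = B^2"
         "(\<forall>t::nat. pifo_expect n p \<gamma> x0 R 2 fs (favg n fs) t - favg n fs xstar
             \<ge> L * B^2 / 2 - L * B^2 / 2 * (real t * p istar) / 1)"
    proof -
      have Lnn: "0 \<le> L" using L by simp
      show ?thesis using simple_full[OF alg I(1) Lnn, where B=B] that by blast
    qed
    have nrm: "vnorm 2 (vsub (x0 2) xstar) \<le> B" using FS(7) B by (intro vnorm_le_from_sq) auto
    have dle: "real (2::nat) \<le> 2 * (1 + B * real n powr (-1/4) * sqrt (L / \<epsilon>))"
      using K0 unfolding K_def r_def by simp
    define G where "G = L * B^2 / 2"
    have G2: "G \<ge> 2 * \<epsilon>" using eL by (simp add: G_def)
    have Gnn: "G \<ge> 0" using G2 e by simp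
    have exp: "pifo_expect n p \<gamma> x0 R 2 fs (favg n fs) t - favg n fs xstar \<ge> \<epsilon>"
      if t: "real t \<le> 1/64 * (real n + B * real n powr (3/4) * sqrt (L / \<epsilon>))" for t :: nat
    proof -
      define a where "a = real t * p istar"
      have "a \<le> real n * (1 + K) / 64 * (1 / real n)"
        unfolding a_def using t Tb I(2) p0 by (intro mult_mono) auto
      also have "\<dots> = (1 + K) / 64" using n0 by simp
      also have "\<dots> \<le> 1/2" using False by simp
      finally have am: "a \<le> 1/2" .
      have "G * a \<le> G * (1/2)" using am Gnn by (intro mult_left_mono) auto
      then have "G - G * a / 1 \<ge> \<epsilon>" using G2 by simp
      moreover have "G - G * a / 1 \<le> pifo_expect n p \<gamma> x0 R 2 fs (favg n fs) t - favg n fs xstar"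
        using FS(8)[rule_format, of t] unfolding G_def a_def by simp
      ultimately show ?thesis by linarith
    qed
    show ?thesis
      using dle FS(1-6) nrm exp by blast
  qed
qed

theorem theorem3p4:
  shows "\<exists>c>0. \<exists>C>0. \<forall>(n::nat) (L::real) (B::real) (\<epsilon>::real).
    n \<ge> 2 \<and> L > 0 \<and> B > 0 \<and> \<epsilon> > 0 \<and> \<epsilon> \<le> L * B^2 / 4 \<longrightarrow>
    (\<forall>p \<gamma> x0 R. pifo_algorithm n p \<gamma> x0 R \<longrightarrow>
      (\<exists>(d::nat) (fs::nat \<Rightarrow> vec \<Rightarrow> real) xstar.
         real d \<le> C * (1 + B * real n powr (-1/4) * sqrt (L / \<epsilon>)) \<and>
         (\<forall>i<n. \<forall>x\<in>Rd d. \<exists>g. has_grad d (fs i) x g) \<and>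
         (\<forall>i<n. \<forall>t\<ge>1. \<forall>x\<in>Rd d. \<exists>!u. is_prox d (\<gamma> t) (fs i) x u) \<and>
         avg_smooth d n L fs \<and>
         convex_Rd d (favg n fs) \<and>
         xstar \<in> Rd d \<and> (\<forall>y\<in>Rd d. favg n fs xstar \<le> favg n fs y) \<and>
         vnorm d (vsub (x0 d) xstar) \<le> B \<and>
         (\<forall>t::nat. real t \<le> c * (real n + B * real n powr (3/4) * sqrt (L / \<epsilon>)) \<longrightarrow>
            pifo_expect n p \<gamma> x0 R d fs (favg n fs) t - favg n fs xstar \<ge> \<epsilon>)))"
proof -
  have A: "\<forall>(n::nat) (L::real) (B::real) (\<epsilon>::real).
    n \<ge> 2 \<and> L > 0 \<and> B > 0 \<and> \<epsilon> > 0 \<and> \<epsilon> \<le> L * B^2 / 4 \<longrightarrow>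
    (\<forall>p \<gamma> x0 R. pifo_algorithm n p \<gamma> x0 R \<longrightarrow>
      (\<exists>(d::nat) (fs::nat \<Rightarrow> vec \<Rightarrow> real) xstar.
         real d \<le> 2 * (1 + B * real n powr (-1/4) * sqrt (L / \<epsilon>)) \<and>
         (\<forall>i<n. \<forall>x\<in>Rd d. \<exists>g. has_grad d (fs i) x g) \<and>
         (\<forall>i<n. \<forall>t\<ge>1. \<forall>x\<in>Rd d. \<exists>!u. is_prox d (\<gamma> t) (fs i) x u) \<and>
         avg_smooth d n L fs \<and>
         convex_Rd d (favg n fs) \<and>
         xstar \<in> Rd d \<and> (\<forall>y\<in>Rd d. favg n fs xstar \<le> favg n fs y) \<and>
         vnorm d (vsub (x0 d) xstar) \<le> B \<and>
         (\<forall>t::nat. real t \<le> 1/64 * (real n + B * real n powr (3/4) * sqrt (L / \<epsilon>)) \<longrightarrow>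
            pifo_expect n p \<gamma> x0 R d fs (favg n fs) t - favg n fs xstar \<ge> \<epsilon>)))"
  proof (intro allI impI)
    fix n :: nat and L B \<epsilon> :: real and p \<gamma> x0 R
    assume H: "n \<ge> 2 \<and> L > 0 \<and> B > 0 \<and> \<epsilon> > 0 \<and> \<epsilon> \<le> L * B^2 / 4" and alg: "pifo_algorithm n p \<gamma> x0 R"
    then show "\<exists>(d::nat) (fs::nat \<Rightarrow> vec \<Rightarrow> real) xstar.
         real d \<le> 2 * (1 + B * real n powr (-1/4) * sqrt (L / \<epsilon>)) \<and>
         (\<forall>i<n. \<forall>x\<in>Rd d. \<exists>g. has_grad d (fs i) x g) \<and>
         (\<forall>i<n. \<forall>t\<ge>1. \<forall>x\<in>Rd d. \<exists>!u. is_prox d (\<gamma> t) (fs i) x u) \<and>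
         avg_smooth d n L fs \<and>
         convex_Rd d (favg n fs) \<and>
         xstar \<in> Rd d \<and> (\<forall>y\<in>Rd d. favg n fs xstar \<le> favg n fs y) \<and>
         vnorm d (vsub (x0 d) xstar) \<le> B \<and>
         (\<forall>t::nat. real t \<le> 1/64 * (real n + B * real n powr (3/4) * sqrt (L / \<epsilon>)) \<longrightarrow>
            pifo_expect n p \<gamma> x0 R d fs (favg n fs) t - favg n fs xstar \<ge> \<epsilon>)"
      using main_case[of n L B \<epsilon> p \<gamma> x0 R] by blast
  qed
  have c: "(0::real) < 1/64" and C: "(0::real) < 2" by simp_all
  show ?thesis using A c C by blast
qed


end
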